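(* Let $T$ be a tiling of $\mathbb{R}^d$ with tiling space $\Omega_T$, and let $\{d_r\}_{r>0}$ be the family on $\Omega_T$ defined by $d_r(T_1,T_2)=\inf\{\varepsilon>0\mid\exists u\in\mathbb{R}^d,\ |u|<\varepsilon,\ (T_1+u)\cap rD=T_2\cap rD\}$ (with value $\infty$ if no such $u$ exists). Then the diffeology on $\Omega_T$ generated by the family of maps $\{F_{T_1}\colon\mathbb{R}^d\to\Omega_T,\ x\mapsto T_1+x\mid T_1\in\Omega_T\}$ coincides with the diffeology induced by $\{d_r\}_{r>0}$, namely the set of parametrizations $p\colon U_p\to\Omega_T$ such that for every $t_0\in U_p$ there exists $\delta>0$ with: (1) for each $r>0$, $t\mapsto d_r(p(t_0),p(t))$ is continuous on $B_\delta(t_0)$; (2) for each $t_1\in B_\delta(t_0)\setminus p^{-1}(p(t_0))$ and each $r>0$, $t\mapsto d_r(p(t_1),p(t))$ is smooth at $t_0$ (as a real-valued map on $B_\delta(t_0)$).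
   Context: A tiling of $\mathbb{R}^d$ ($d\ge1$) is a collection $T$ of subsets of $\mathbb{R}^d$ (tiles) such that: each tile is a translate of one of finitely many subsets $\tau_1,\dots,\tau_n$ (the prototiles); each tile is homeomorphic to a closed $d$-disk; the union of the tiles is $\mathbb{R}^d$; distinct tiles have disjoint interiors. For $A\subset\mathbb{R}^d$, $T\cap A=\{t\in T\mid t\cap A\ne\emptyset\}$; $T+x=\{t+x\mid t\in T\}$; $rD$ is the closed ball of radius $r$ about $0$ and $B_\rho(c)$ the open ball of radius $\rho$ about $c$. On the orbit $\{T+x\mid x\in\mathbb{R}^d\}$ the metric $d(T,T')$ is the infimum of the set of $\varepsilon>0$ for which there exist $u,v$ with $|u|,|v|<\varepsilon$ and $(T+u)\cap B_{1/\varepsilon}(0)=(T'+v)\cap B_{1/\varepsilon}(0)$, together with $1/\sqrt2$; $\Omega_T$ is the metric completion, each element regarded as a tiling whose tiles are translates of prototiles of $T$. A parametrization is a map from an open subset $U_p$ of some $\mathbb{R}^n$. A diffeology on a set $X$ is a set of parametrizations containing all constant ones, closed under locality (a parametrization whose restrictions to the members of some open cover of its domain are in the set is in the set) and under precomposition with smooth maps between open subsets of Euclidean spaces. The diffeology generated by a family $\mathscr F$ of parametrizations is the smallest diffeology containing $\mathscr F$. *)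

theory Defs
  imports "HOL-Analysis.Analysis"
begin

definition translate_tiling :: "'a::real_vector set set \<Rightarrow> 'a \<Rightarrow> 'a set set" where
  "translate_tiling T x = (\<lambda>t. (\<lambda>y. y + x) ` t) ` T"

text \<open>T \<inter> A in the paper's notation: tiles meeting A.\<close>
definition patch :: "'a set set \<Rightarrow> 'a set \<Rightarrow> 'a set set" where
  "patch T A = {t \<in> T. t \<inter> A \<noteq> {}}"

definition is_tiling :: "'a::euclidean_space set set \<Rightarrow> bool" where
  "is_tiling T \<longleftrightarrow>
     (\<exists>P. finite P \<and> (\<forall>t\<in>T. \<exists>\<tau>\<in>P. \<exists>x. t = (\<lambda>y. y + x) ` \<tau>)) \<and>
     (\<forall>t\<in>T. t homeomorphic cball (0::'a) 1) \<and>
     \<Union>T = UNIV \<and>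
     (\<forall>t\<in>T. \<forall>t'\<in>T. t \<noteq> t' \<longrightarrow> interior t \<inter> interior t' = {})"

text \<open>The tiling metric (defined by the same formula for any two tilings).\<close>
definition tdist :: "'a::euclidean_space set set \<Rightarrow> 'a set set \<Rightarrow> real" where
  "tdist T T' = Inf ({\<epsilon>. \<epsilon> > 0 \<and> (\<exists>u v. norm u < \<epsilon> \<and> norm v < \<epsilon> \<and>
        patch (translate_tiling T u) (ball 0 (1/\<epsilon>)) = patch (translate_tiling T' v) (ball 0 (1/\<epsilon>)))}
      \<union> {1 / sqrt 2})"

text \<open>The tiling space: the metric completion of the orbit, realised as the set of tilings
  (with tiles translates of tiles of T) that are limits of translates of T.\<close>
definition tiling_space :: "'a::euclidean_space set set \<Rightarrow> 'a set set set" where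
  "tiling_space T = {T'. is_tiling T' \<and> (\<forall>t\<in>T'. \<exists>s\<in>T. \<exists>x. t = (\<lambda>y. y + x) ` s) \<and>
      (\<forall>\<epsilon>>0. \<exists>x. tdist T' (translate_tiling T x) < \<epsilon>)}"

text \<open>The family d_r (value \<infinity> when no u exists: Inf of the empty set of ereals).\<close>
definition dr :: "real \<Rightarrow> 'a::euclidean_space set set \<Rightarrow> 'a set set \<Rightarrow> ereal" where
  "dr r T1 T2 = Inf (ereal ` {\<epsilon>. \<epsilon> > 0 \<and> (\<exists>u. norm u < \<epsilon> \<and>
       patch (translate_tiling T1 u) (cball 0 r) = patch T2 (cball 0 r))})"

section \<open>Euclidean spaces R^n, uniformly encoded as functions nat => real vanishing from n on\<close>

definition Rn :: "nat \<Rightarrow> (nat \<Rightarrow> real) set" where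
  "Rn n = {x. \<forall>i\<ge>n. x i = 0}"

definition Rdist :: "nat \<Rightarrow> (nat \<Rightarrow> real) \<Rightarrow> (nat \<Rightarrow> real) \<Rightarrow> real" where
  "Rdist n x y = sqrt (\<Sum>i<n. (x i - y i)^2)"

definition Rball :: "nat \<Rightarrow> (nat \<Rightarrow> real) \<Rightarrow> real \<Rightarrow> (nat \<Rightarrow> real) set" where
  "Rball n c r = {x \<in> Rn n. Rdist n c x < r}"

definition Ropen :: "nat \<Rightarrow> (nat \<Rightarrow> real) set \<Rightarrow> bool" where
  "Ropen n U \<longleftrightarrow> U \<subseteq> Rn n \<and> (\<forall>x\<in>U. \<exists>e>0. Rball n x e \<subseteq> U)"

definition Rcontinuous_on :: "nat \<Rightarrow> (nat \<Rightarrow> real) set \<Rightarrow> ((nat \<Rightarrow> real) \<Rightarrow> 'b::topological_space) \<Rightarrow> bool" where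
  "Rcontinuous_on n U f \<longleftrightarrow>
     (\<forall>x\<in>U. \<forall>S. open S \<and> f x \<in> S \<longrightarrow> (\<exists>e>0. \<forall>y\<in>U. Rdist n x y < e \<longrightarrow> f y \<in> S))"

fun Ck :: "nat \<Rightarrow> nat \<Rightarrow> (nat \<Rightarrow> real) set \<Rightarrow> ((nat \<Rightarrow> real) \<Rightarrow> real) \<Rightarrow> bool" where
  "Ck n 0 U f = Rcontinuous_on n U f"
| "Ck n (Suc k) U f = (Rcontinuous_on n U f \<and>
     (\<forall>i<n. \<exists>g. (\<forall>x\<in>U. ((\<lambda>s. f (x(i := x i + s))) has_real_derivative g x) (at 0)) \<and> Ck n k U g))"

definition Rsmooth :: "nat \<Rightarrow> (nat \<Rightarrow> real) set \<Rightarrow> ((nat \<Rightarrow> real) \<Rightarrow> real) \<Rightarrow> bool" where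
  "Rsmooth n U f \<longleftrightarrow> (\<forall>k. Ck n k U f)"

definition Rsmooth_map :: "nat \<Rightarrow> nat \<Rightarrow> (nat \<Rightarrow> real) set \<Rightarrow> ((nat \<Rightarrow> real) \<Rightarrow> (nat \<Rightarrow> real)) \<Rightarrow> bool" where
  "Rsmooth_map m n V g \<longleftrightarrow> g ` V \<subseteq> Rn n \<and> (\<forall>j<n. Rsmooth m V (\<lambda>x. g x j))"

definition Rsmooth_at :: "nat \<Rightarrow> (nat \<Rightarrow> real) \<Rightarrow> (nat \<Rightarrow> real) set \<Rightarrow> ((nat \<Rightarrow> real) \<Rightarrow> ereal) \<Rightarrow> bool" where
  "Rsmooth_at n t0 S f \<longleftrightarrow> (\<exists>V. Ropen n V \<and> t0 \<in> V \<and> V \<subseteq> S \<and>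
      (\<forall>t\<in>V. \<bar>f t\<bar> \<noteq> \<infinity>) \<and> Rsmooth n V (\<lambda>t. real_of_ereal (f t)))"

text \<open>A parametrization is a triple (n, U, p): U open in R^n, p : U -> X (extensional).\<close>
type_synonym 'x param = "nat \<times> (nat \<Rightarrow> real) set \<times> ((nat \<Rightarrow> real) \<Rightarrow> 'x)"

definition is_param :: "'x set \<Rightarrow> 'x param \<Rightarrow> bool" where
  "is_param X P \<longleftrightarrow> (case P of (n, U, p) \<Rightarrow> Ropen n U \<and> p \<in> U \<rightarrow>\<^sub>E X)"

definition diffeology :: "'x set \<Rightarrow> 'x param set \<Rightarrow> bool" where
  "diffeology X D \<longleftrightarrow>
     (\<forall>P\<in>D. is_param X P) \<and>
     (\<forall>n U c. Ropen n U \<and> c \<in> X \<longrightarrow> (n, U, restrict (\<lambda>_. c) U) \<in> D) \<and>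
     (\<forall>n U p. is_param X (n, U, p) \<and>
        (\<exists>\<V>. (\<forall>V\<in>\<V>. Ropen n V) \<and> \<Union>\<V> = U \<and> (\<forall>V\<in>\<V>. (n, V, restrict p V) \<in> D))
        \<longrightarrow> (n, U, p) \<in> D) \<and>
     (\<forall>n U p m V g. (n, U, p) \<in> D \<and> Ropen m V \<and> Rsmooth_map m n V g \<and> g ` V \<subseteq> U
        \<longrightarrow> (m, V, restrict (p \<circ> g) V) \<in> D)"

definition generated_diffeology :: "'x set \<Rightarrow> 'x param set \<Rightarrow> 'x param set" where
  "generated_diffeology X F = \<Inter>{D. diffeology X D \<and> F \<subseteq> D}"

definition basis_enum :: "nat \<Rightarrow> 'a::euclidean_space" where
  "basis_enum = (SOME b. bij_betw b {..<DIM('a)} Basis)"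

text \<open>The fixed linear isometry R^d (encoded) -> 'a.\<close>
definition vec_of :: "(nat \<Rightarrow> real) \<Rightarrow> 'a::euclidean_space" where
  "vec_of x = (\<Sum>i<DIM('a). x i *\<^sub>R basis_enum i)"

definition translation_params :: "'a::euclidean_space set set \<Rightarrow> 'a set set param set" where
  "translation_params T = {(DIM('a), Rn DIM('a),
       restrict (\<lambda>x. translate_tiling T1 (vec_of x)) (Rn DIM('a))) | T1. T1 \<in> tiling_space T}"

definition dr_diffeology :: "'a::euclidean_space set set \<Rightarrow> 'a set set param set" where
  "dr_diffeology T = {(n, U, p). is_param (tiling_space T) (n, U, p) \<and>
     (\<forall>t0\<in>U. \<exists>\<delta>>0. Rball n t0 \<delta> \<subseteq> U \<and>
        (\<forall>r>0. Rcontinuous_on n (Rball n t0 \<delta>) (\<lambda>t. dr r (p t0) (p t))) \<and>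
        (\<forall>t1 \<in> Rball n t0 \<delta> - {t\<in>U. p t = p t0}. \<forall>r>0.
            Rsmooth_at n t0 (Rball n t0 \<delta>) (\<lambda>t. dr r (p t1) (p t))))}"

end

theory Submission
  imports Defs
begin

lemma Rdist_L2: "Rdist n x y = L2_set (\<lambda>i. x i - y i) {..<n}"
  by (simp add: Rdist_def L2_set_def)

lemma Rdist_nonneg[simp]: "0 \<le> Rdist n x y"
  by (simp add: Rdist_def sum_nonneg)

lemma Rdist_sym: "Rdist n x y = Rdist n y x"
  unfolding Rdist_def by (simp add: power2_commute)

lemma Rdist_self[simp]: "Rdist n x x = 0"
  by (simp add: Rdist_def)

lemma Rdist_triangle: "Rdist n x z \<le> Rdist n x y + Rdist n y z"
proof -
  have "Rdist n x z = L2_set (\<lambda>i. (x i - y i) + (y i - z i)) {..<n}"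
    by (simp add: Rdist_L2)
  also have "\<dots> \<le> Rdist n x y + Rdist n y z"
    unfolding Rdist_L2 by (rule L2_set_triangle_ineq)
  finally show ?thesis .
qed

lemma Rdist_coord: "i < n \<Longrightarrow> \<bar>x i - y i\<bar> \<le> Rdist n x y"
proof -
  assume "i < n"
  have "Rdist n x y = L2_set (\<lambda>i. \<bar>x i - y i\<bar>) {..<n}"
    by (simp add: Rdist_def L2_set_def)
  moreover have "\<bar>x i - y i\<bar> \<le> L2_set (\<lambda>i. \<bar>x i - y i\<bar>) {..<n}"
    using \<open>i < n\<close> by (intro member_le_L2_set) auto
  ultimately show ?thesis by simp
qed

lemma Rdist_le_sum: "Rdist n x y \<le> (\<Sum>i<n. \<bar>x i - y i\<bar>)"
  unfolding Rdist_L2 by (rule L2_set_le_sum_abs)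

lemma Rdist_mono_coord:
  assumes "\<And>j. j < n \<Longrightarrow> \<bar>y j - w j\<bar> \<le> \<bar>y j - v j\<bar>"
  shows "Rdist n y w \<le> Rdist n y v"
  unfolding Rdist_def
proof (rule real_sqrt_le_mono, rule sum_mono)
  fix j assume "j \<in> {..<n}"
  then show "(y j - w j)\<^sup>2 \<le> (y j - v j)\<^sup>2"
    using assms abs_le_square_iff by auto
qed

lemma Rdist_upd: "i < n \<Longrightarrow> Rdist n x (x(i := x i + s)) = \<bar>s\<bar>"
proof -
  assume i: "i < n"
  have "(\<Sum>j<n. (x j - (x(i := x i + s)) j)\<^sup>2) = (\<Sum>j<n. if j = i then s\<^sup>2 else 0)"
    by (intro sum.cong) auto
  also have "\<dots> = s\<^sup>2" using i by simp
  finally show ?thesis by (simp add: Rdist_def)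
qed

lemma Rn_upd: "x \<in> Rn n \<Longrightarrow> i < n \<Longrightarrow> x(i := c) \<in> Rn n"
  by (auto simp: Rn_def)

lemma Rdist_pos: "x \<in> Rn n \<Longrightarrow> y \<in> Rn n \<Longrightarrow> x \<noteq> y \<Longrightarrow> 0 < Rdist n x y"
proof -
  assume x: "x \<in> Rn n" and y: "y \<in> Rn n" and ne: "x \<noteq> y"
  then obtain i where "x i \<noteq> y i" by auto
  have "i < n"
  proof (rule ccontr)
    assume "\<not> i < n"
    then have "x i = 0" "y i = 0" using x y by (auto simp: Rn_def)
    with \<open>x i \<noteq> y i\<close> show False by simp
  qed
  with \<open>x i \<noteq> y i\<close> have "0 < \<bar>x i - y i\<bar>" by simp
  also have "\<dots> \<le> Rdist n x y" using Rdist_coord[OF \<open>i<n\<close>] .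
  finally show ?thesis .
qed

lemma Rball_sub_Rn: "Rball n c r \<subseteq> Rn n" by (auto simp: Rball_def)

lemma Ropen_Rball: "Ropen n (Rball n c r)"
  unfolding Ropen_def
proof (intro conjI ballI)
  show "Rball n c r \<subseteq> Rn n" by (rule Rball_sub_Rn)
  fix x assume x: "x \<in> Rball n c r"
  then have "0 < r - Rdist n c x" by (simp add: Rball_def)
  moreover have "Rball n x (r - Rdist n c x) \<subseteq> Rball n c r"
  proof
    fix y assume "y \<in> Rball n x (r - Rdist n c x)"
    then show "y \<in> Rball n c r"
      using Rdist_triangle[of n c y x] by (auto simp: Rball_def)
  qed
  ultimately show "\<exists>e>0. Rball n x e \<subseteq> Rball n c r" by blast
qed

lemma Rball_center: "c \<in> Rn n \<Longrightarrow> 0 < r \<Longrightarrow> c \<in> Rball n c r"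
  by (simp add: Rball_def)

lemma Rball_mono: "r \<le> r' \<Longrightarrow> Rball n c r \<subseteq> Rball n c r'"
  by (auto simp: Rball_def)

lemma Ropen_Int: "Ropen n A \<Longrightarrow> Ropen n B \<Longrightarrow> Ropen n (A \<inter> B)"
  unfolding Ropen_def
proof (intro conjI ballI)
  assume A: "A \<subseteq> Rn n \<and> (\<forall>x\<in>A. \<exists>e>0. Rball n x e \<subseteq> A)"
     and B: "B \<subseteq> Rn n \<and> (\<forall>x\<in>B. \<exists>e>0. Rball n x e \<subseteq> B)"
  show "A \<inter> B \<subseteq> Rn n" using A by auto
  fix x assume "x \<in> A \<inter> B"
  then obtain e1 e2 where "e1 > 0" "Rball n x e1 \<subseteq> A" "e2 > 0" "Rball n x e2 \<subseteq> B"
    using A B by blast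
  then show "\<exists>e>0. Rball n x e \<subseteq> A \<inter> B"
    using Rball_mono[of "min e1 e2" e1 n x] Rball_mono[of "min e1 e2" e2 n x]
    by (intro exI[of _ "min e1 e2"]) auto
qed

lemma Ropen_sub: "Ropen n U \<Longrightarrow> U \<subseteq> Rn n" by (simp add: Ropen_def)

lemma Ropen_ball_in: "Ropen n U \<Longrightarrow> x \<in> U \<Longrightarrow> \<exists>e>0. Rball n x e \<subseteq> U"
  by (simp add: Ropen_def)

lemma Ropen_upd_eventually:
  assumes "Ropen n U" "x \<in> U" "i < n"
  shows "eventually (\<lambda>s. x(i := x i + s) \<in> U) (nhds 0)"
proof -
  obtain e where e: "e > 0" "Rball n x e \<subseteq> U" using Ropen_ball_in[OF assms(1,2)] by blast
  have xR: "x \<in> Rn n" using assms Ropen_sub by blast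
  show ?thesis unfolding eventually_nhds_metric
  proof (intro exI[of _ e] conjI allI impI)
    fix s :: real assume "dist s 0 < e"
    then have "x(i := x i + s) \<in> Rball n x e"
      using Rdist_upd[OF assms(3), of x s] Rn_upd[OF xR assms(3)] by (auto simp: Rball_def dist_real_def)
    then show "x(i := x i + s) \<in> U" using e by blast
  qed (use e in auto)
qed

section \<open>Filters\<close>

definition Rnhds :: "nat \<Rightarrow> (nat \<Rightarrow> real) set \<Rightarrow> (nat \<Rightarrow> real) \<Rightarrow> (nat \<Rightarrow> real) filter" where
  "Rnhds n U x = (INF e\<in>{0<..}. principal {y\<in>U. Rdist n x y < e})"

lemma eventually_Rnhds:
  "eventually P (Rnhds n U x) \<longleftrightarrow> (\<exists>e>0. \<forall>y\<in>U. Rdist n x y < e \<longrightarrow> P y)"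
  unfolding Rnhds_def
proof (subst eventually_INF_base)
  show "{0<..} \<noteq> ({}::real set)" by auto
  fix a b :: real assume "a \<in> {0<..}" "b \<in> {0<..}"
  then show "\<exists>z\<in>{0<..}. principal {y \<in> U. Rdist n x y < z} \<le> inf (principal {y \<in> U. Rdist n x y < a}) (principal {y \<in> U. Rdist n x y < b})"
    by (intro bexI[of _ "min a b"]) auto
qed (auto simp: eventually_principal)

lemma Rcontinuous_on_tendsto:
  "Rcontinuous_on n U f \<longleftrightarrow> (\<forall>x\<in>U. (f \<longlongrightarrow> f x) (Rnhds n U x))"
  unfolding Rcontinuous_on_def tendsto_def eventually_Rnhds by blast

lemma Rcontinuous_onI:
  "(\<And>x. x \<in> U \<Longrightarrow> (f \<longlongrightarrow> f x) (Rnhds n U x)) \<Longrightarrow> Rcontinuous_on n U f"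
  by (simp add: Rcontinuous_on_tendsto)

lemma Rcontinuous_onD:
  "Rcontinuous_on n U f \<Longrightarrow> x \<in> U \<Longrightarrow> (f \<longlongrightarrow> f x) (Rnhds n U x)"
  by (simp add: Rcontinuous_on_tendsto)

lemma Rcontinuous_on_subset:
  "Rcontinuous_on n U f \<Longrightarrow> V \<subseteq> U \<Longrightarrow> Rcontinuous_on n V f"
  unfolding Rcontinuous_on_def by (meson subsetD)

lemma Rcontinuous_on_cong:
  "Rcontinuous_on n U f \<Longrightarrow> (\<And>x. x \<in> U \<Longrightarrow> f x = g x) \<Longrightarrow> Rcontinuous_on n U g"
  unfolding Rcontinuous_on_def by metis

lemma tendsto_coord_Rnhds:
  assumes "i < n"
  shows "((\<lambda>y. y i) \<longlongrightarrow> x i) (Rnhds n U x)"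
proof (rule tendstoI)
  fix e :: real assume "e > 0"
  then show "eventually (\<lambda>y. dist (y i) (x i) < e) (Rnhds n U x)"
    unfolding eventually_Rnhds
  proof (intro exI[of _ e] conjI ballI impI)
    fix y assume "Rdist n x y < e"
    then show "dist (y i) (x i) < e"
      using Rdist_coord[OF assms, of x y] by (simp add: dist_real_def abs_minus_commute)
  qed (rule \<open>e > 0\<close>)
qed

lemma Rcontinuous_on_coord: "i < n \<Longrightarrow> Rcontinuous_on n U (\<lambda>y. y i)"
  by (rule Rcontinuous_onI) (rule tendsto_coord_Rnhds)

lemma Rcontinuous_on_const: "Rcontinuous_on n U (\<lambda>y. c)"
  by (rule Rcontinuous_onI) simp

lemma Rcontinuous_on_add:
  fixes f g :: "(nat \<Rightarrow> real) \<Rightarrow> real"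
  shows "Rcontinuous_on n U f \<Longrightarrow> Rcontinuous_on n U g \<Longrightarrow> Rcontinuous_on n U (\<lambda>x. f x + g x)"
  by (auto simp: Rcontinuous_on_tendsto intro!: tendsto_add)

lemma Rcontinuous_on_mult:
  fixes f g :: "(nat \<Rightarrow> real) \<Rightarrow> real"
  shows "Rcontinuous_on n U f \<Longrightarrow> Rcontinuous_on n U g \<Longrightarrow> Rcontinuous_on n U (\<lambda>x. f x * g x)"
  by (auto simp: Rcontinuous_on_tendsto intro!: tendsto_mult)

lemma Rcontinuous_on_sum:
  fixes f :: "'i \<Rightarrow> (nat \<Rightarrow> real) \<Rightarrow> real"
  shows "(\<And>j. j \<in> A \<Longrightarrow> Rcontinuous_on n U (f j)) \<Longrightarrow> Rcontinuous_on n U (\<lambda>x. \<Sum>j\<in>A. f j x)"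
  by (auto simp: Rcontinuous_on_tendsto intro!: tendsto_sum)

lemma filterlim_Rmap:
  assumes cont: "\<And>j. j < n \<Longrightarrow> Rcontinuous_on m V (\<lambda>s. h s j)"
    and hV: "h ` V \<subseteq> U" and s: "s \<in> V"
  shows "filterlim h (Rnhds n U (h s)) (Rnhds m V s)"
  unfolding filterlim_def le_filter_def eventually_filtermap
proof (intro allI impI)
  fix P assume "eventually P (Rnhds n U (h s))"
  then obtain e where e: "e > 0" "\<forall>y\<in>U. Rdist n (h s) y < e \<longrightarrow> P y"
    unfolding eventually_Rnhds by blast
  have "((\<lambda>s'. \<Sum>j<n. \<bar>h s j - h s' j\<bar>) \<longlongrightarrow> (\<Sum>j<n. \<bar>h s j - h s j\<bar>)) (Rnhds m V s)"
    using cont s by (intro tendsto_intros) (auto dest: Rcontinuous_onD)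
  then have "eventually (\<lambda>s'. (\<Sum>j<n. \<bar>h s j - h s' j\<bar>) < e) (Rnhds m V s)"
    using e(1) by (auto dest: order_tendstoD(2))
  moreover have "eventually (\<lambda>s'. s' \<in> V) (Rnhds m V s)"
    unfolding eventually_Rnhds by (auto intro: exI[of _ 1])
  ultimately show "eventually (\<lambda>x. P (h x)) (Rnhds m V s)"
  proof eventually_elim
    case (elim s')
    then have "Rdist n (h s) (h s') < e" using Rdist_le_sum[of n "h s" "h s'"] by linarith
    then show ?case using e hV elim by auto
  qed
qed

lemma Rcontinuous_on_compose:
  assumes f: "Rcontinuous_on n U f"
    and cont: "\<And>j. j < n \<Longrightarrow> Rcontinuous_on m V (\<lambda>s. h s j)"
    and hV: "h ` V \<subseteq> U"
  shows "Rcontinuous_on m V (\<lambda>s. f (h s))"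
proof (rule Rcontinuous_onI)
  fix s assume s: "s \<in> V"
  then have "h s \<in> U" using hV by auto
  then have "(f \<longlongrightarrow> f (h s)) (Rnhds n U (h s))" using f by (rule Rcontinuous_onD[rotated])
  then show "((\<lambda>s. f (h s)) \<longlongrightarrow> f (h s)) (Rnhds m V s)"
    using filterlim_Rmap[OF cont hV s] by (rule filterlim_compose)
qed

lemma Rcontinuous_on_real_iff:
  fixes f :: "(nat \<Rightarrow> real) \<Rightarrow> real"
  shows "Rcontinuous_on n U f \<longleftrightarrow> (\<forall>x\<in>U. \<forall>e>0. \<exists>d>0. \<forall>y\<in>U. Rdist n x y < d \<longrightarrow> \<bar>f y - f x\<bar> < e)"
  unfolding Rcontinuous_on_tendsto tendsto_iff eventually_Rnhds dist_real_def by blast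

definition pd :: "(nat \<Rightarrow> real) set \<Rightarrow> ((nat \<Rightarrow> real) \<Rightarrow> real) \<Rightarrow> nat \<Rightarrow> ((nat \<Rightarrow> real) \<Rightarrow> real) \<Rightarrow> bool" where
  "pd U f i g \<longleftrightarrow> (\<forall>x\<in>U. ((\<lambda>s. f (x(i := x i + s))) has_real_derivative g x) (at 0))"

lemma Ck_Suc_iff: "Ck n (Suc k) U f \<longleftrightarrow> Rcontinuous_on n U f \<and> (\<forall>i<n. \<exists>g. pd U f i g \<and> Ck n k U g)"
  by (simp add: pd_def)

lemma Ck_cont: "Ck n k U f \<Longrightarrow> Rcontinuous_on n U f"
  by (cases k) auto

lemma Ck_mono_Suc: "Ck n (Suc k) U f \<Longrightarrow> Ck n k U f"
proof (induction k arbitrary: f)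
  case 0
  then show ?case by simp
next
  case (Suc k)
  then show ?case unfolding Ck_Suc_iff[of n "Suc k"] Ck_Suc_iff[of n k] by blast
qed

lemma Ck_le: "k \<le> k' \<Longrightarrow> Ck n k' U f \<Longrightarrow> Ck n k U f"
proof (induction k' arbitrary: k)
  case 0 then show ?case by simp
next
  case (Suc k')
  show ?case
  proof (cases "k = Suc k'")
    case True then show ?thesis using Suc.prems(2) by simp
  next
    case False
    then have "k \<le> k'" using Suc.prems(1) by simp
    then show ?thesis using Suc.IH Ck_mono_Suc[OF Suc.prems(2)] by blast
  qed
qed

lemma Ck_subset: "Ck n k U f \<Longrightarrow> V \<subseteq> U \<Longrightarrow> Ck n k V f"
proof (induction k arbitrary: f)
  case 0 then show ?case by (auto intro: Rcontinuous_on_subset)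
next
  case (Suc k)
  then show ?case unfolding Ck_Suc_iff pd_def by (meson Rcontinuous_on_subset subsetD)
qed

lemma pd_cong:
  assumes "Ropen n U" "i < n" "pd U f i g" "\<And>x. x \<in> U \<Longrightarrow> f x = f' x"
  shows "pd U f' i g"
  unfolding pd_def
proof
  fix x assume x: "x \<in> U"
  have ev: "eventually (\<lambda>s. f (x(i := x i + s)) = f' (x(i := x i + s))) (nhds 0)"
    using Ropen_upd_eventually[OF assms(1) x assms(2)] by eventually_elim (use assms(4) in auto)
  show "((\<lambda>s. f' (x(i := x i + s))) has_real_derivative g x) (at 0)"
    using assms(3) x unfolding pd_def using DERIV_cong_ev[OF refl ev refl] by blast
qed

lemma Ck_cong: "Ropen n U \<Longrightarrow> Ck n k U f \<Longrightarrow> (\<And>x. x \<in> U \<Longrightarrow> f x = f' x) \<Longrightarrow> Ck n k U f'"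
proof (induction k arbitrary: f f')
  case 0 then show ?case by (auto intro: Rcontinuous_on_cong)
next
  case (Suc k)
  show ?case unfolding Ck_Suc_iff
  proof (intro conjI allI impI)
    show "Rcontinuous_on n U f'" using Suc.prems Ck_cont Rcontinuous_on_cong by blast
    fix i assume i: "i < n"
    then obtain g where "pd U f i g" "Ck n k U g" using Suc.prems(2) unfolding Ck_Suc_iff by blast
    moreover have "pd U f' i g"
      by (rule pd_cong[OF Suc.prems(1) i \<open>pd U f i g\<close>]) (rule Suc.prems(3))
    ultimately show "\<exists>g. pd U f' i g \<and> Ck n k U g" by blast
  qed
qed

lemma Ck_const: "Ck n k U (\<lambda>x. c)"
proof (induction k arbitrary: c)
  case 0 then show ?case by (simp add: Rcontinuous_on_const)
next
  case (Suc k)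
  show ?case unfolding Ck_Suc_iff pd_def
    using Suc by (auto simp: Rcontinuous_on_const intro!: exI[of _ "\<lambda>x. 0"])
qed

lemma pd_at0: "pd U f i g \<Longrightarrow> x \<in> U \<Longrightarrow> ((\<lambda>s. f (x(i := x i + s))) has_real_derivative g x) (at 0)"
  by (simp add: pd_def)

lemma Ck_add: "Ck n k U f \<Longrightarrow> Ck n k U g \<Longrightarrow> Ck n k U (\<lambda>x. f x + g x)"
proof (induction k arbitrary: f g)
  case 0 then show ?case by (simp add: Rcontinuous_on_add)
next
  case (Suc k)
  show ?case unfolding Ck_Suc_iff
  proof (intro conjI allI impI)
    show "Rcontinuous_on n U (\<lambda>x. f x + g x)" using Suc.prems Ck_cont Rcontinuous_on_add by blast
    fix i assume i: "i < n"
    obtain df where df: "pd U f i df" "Ck n k U df" using Suc.prems(1) i unfolding Ck_Suc_iff by blast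
    obtain dg where dg: "pd U g i dg" "Ck n k U dg" using Suc.prems(2) i unfolding Ck_Suc_iff by blast
    have "pd U (\<lambda>x. f x + g x) i (\<lambda>x. df x + dg x)"
      unfolding pd_def using df(1) dg(1) by (auto intro!: DERIV_add dest: pd_at0)
    then show "\<exists>h. pd U (\<lambda>x. f x + g x) i h \<and> Ck n k U h" using Suc.IH[OF df(2) dg(2)] by blast
  qed
qed

lemma Ck_mult: "Ck n k U f \<Longrightarrow> Ck n k U g \<Longrightarrow> Ck n k U (\<lambda>x. f x * g x)"
proof (induction k arbitrary: f g)
  case 0 then show ?case by (simp add: Rcontinuous_on_mult)
next
  case (Suc k)
  show ?case unfolding Ck_Suc_iff
  proof (intro conjI allI impI)
    show "Rcontinuous_on n U (\<lambda>x. f x * g x)" using Suc.prems Ck_cont Rcontinuous_on_mult by blast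
    fix i assume i: "i < n"
    obtain df where df: "pd U f i df" "Ck n k U df" using Suc.prems(1) i unfolding Ck_Suc_iff by blast
    obtain dg where dg: "pd U g i dg" "Ck n k U dg" using Suc.prems(2) i unfolding Ck_Suc_iff by blast
    have "pd U (\<lambda>x. f x * g x) i (\<lambda>x. df x * g x + dg x * f x)"
      unfolding pd_def
    proof
      fix x assume x: "x \<in> U"
      show "((\<lambda>s. f (x(i := x i + s)) * g (x(i := x i + s))) has_real_derivative df x * g x + dg x * f x) (at 0)"
        using DERIV_mult[OF pd_at0[OF df(1) x] pd_at0[OF dg(1) x]] by simp
    qed
    moreover have "Ck n k U (\<lambda>x. df x * g x + dg x * f x)"
      using Suc.IH[OF df(2) Ck_mono_Suc[OF Suc.prems(2)]] Suc.IH[OF dg(2) Ck_mono_Suc[OF Suc.prems(1)]]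
      by (rule Ck_add)
    ultimately show "\<exists>h. pd U (\<lambda>x. f x * g x) i h \<and> Ck n k U h" by blast
  qed
qed

lemma Ck_sum: "finite A \<Longrightarrow> (\<And>j. j \<in> A \<Longrightarrow> Ck n k U (f j)) \<Longrightarrow> Ck n k U (\<lambda>x. \<Sum>j\<in>A. f j x)"
proof (induction A rule: finite_induct)
  case empty then show ?case by (simp add: Ck_const)
next
  case (insert a A)
  then show ?case by (simp add: Ck_add)
qed

lemma Ck_cmult: "Ck n k U f \<Longrightarrow> Ck n k U (\<lambda>x. c * f x)"
  using Ck_mult[OF Ck_const] by blast

lemma Ck_diff: "Ck n k U f \<Longrightarrow> Ck n k U g \<Longrightarrow> Ck n k U (\<lambda>x. f x - g x)"
  using Ck_add[of n k U f "\<lambda>x. (-1) * g x"] Ck_cmult[of n k U g "-1"] by simp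

lemma Ck_coord: "i < n \<Longrightarrow> Ck n k U (\<lambda>x. x i)"
proof (induction k)
  case 0 then show ?case by (simp add: Rcontinuous_on_coord)
next
  case (Suc k)
  show ?case unfolding Ck_Suc_iff
  proof (intro conjI allI impI)
    show "Rcontinuous_on n U (\<lambda>x. x i)" using Suc.prems by (rule Rcontinuous_on_coord)
    fix j assume "j < n"
    have "pd U (\<lambda>x. x i) j (\<lambda>x. if i = j then 1 else 0)"
      unfolding pd_def by (auto intro!: derivative_eq_intros)
    then show "\<exists>g. pd U (\<lambda>x. x i) j g \<and> Ck n k U g" using Ck_const by blast
  qed
qed

section \<open>Smooth functions\<close>

lemma Rsmooth_Ck: "Rsmooth n U f \<Longrightarrow> Ck n k U f" by (simp add: Rsmooth_def)

lemma Rsmooth_cont: "Rsmooth n U f \<Longrightarrow> Rcontinuous_on n U f"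
  using Rsmooth_Ck Ck_cont by blast

lemma Rsmooth_subset: "Rsmooth n U f \<Longrightarrow> V \<subseteq> U \<Longrightarrow> Rsmooth n V f"
  unfolding Rsmooth_def using Ck_subset by blast

lemma Rsmooth_cong: "Ropen n U \<Longrightarrow> Rsmooth n U f \<Longrightarrow> (\<And>x. x \<in> U \<Longrightarrow> f x = f' x) \<Longrightarrow> Rsmooth n U f'"
  unfolding Rsmooth_def using Ck_cong by blast

lemma Rsmooth_const: "Rsmooth n U (\<lambda>x. c)" by (simp add: Rsmooth_def Ck_const)
lemma Rsmooth_add: "Rsmooth n U f \<Longrightarrow> Rsmooth n U g \<Longrightarrow> Rsmooth n U (\<lambda>x. f x + g x)"
  by (simp add: Rsmooth_def Ck_add)
lemma Rsmooth_diff: "Rsmooth n U f \<Longrightarrow> Rsmooth n U g \<Longrightarrow> Rsmooth n U (\<lambda>x. f x - g x)"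
  by (simp add: Rsmooth_def Ck_diff)
lemma Rsmooth_mult: "Rsmooth n U f \<Longrightarrow> Rsmooth n U g \<Longrightarrow> Rsmooth n U (\<lambda>x. f x * g x)"
  by (simp add: Rsmooth_def Ck_mult)
lemma Rsmooth_cmult: "Rsmooth n U f \<Longrightarrow> Rsmooth n U (\<lambda>x. c * f x)"
  by (simp add: Rsmooth_def Ck_cmult)
lemma Rsmooth_sum: "finite A \<Longrightarrow> (\<And>j. j \<in> A \<Longrightarrow> Rsmooth n U (f j)) \<Longrightarrow> Rsmooth n U (\<lambda>x. \<Sum>j\<in>A. f j x)"
  by (simp add: Rsmooth_def Ck_sum)
lemma Rsmooth_coord: "i < n \<Longrightarrow> Rsmooth n U (\<lambda>x. x i)"
  by (simp add: Rsmooth_def Ck_coord)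

lemma Rsmooth_partial:
  assumes U: "Ropen n U" and f: "Rsmooth n U f" and i: "i < n"
  shows "\<exists>g. pd U f i g \<and> Rsmooth n U g"
proof -
  obtain g0 where g0: "pd U f i g0"
    using f i unfolding Rsmooth_def by (metis Ck_Suc_iff)
  have "Ck n k U g0" for k
  proof -
    obtain g where g: "pd U f i g" "Ck n k U g"
      using f i unfolding Rsmooth_def by (metis Ck_Suc_iff)
    have "g x = g0 x" if "x \<in> U" for x
      using DERIV_unique[OF pd_at0[OF g(1) that] pd_at0[OF g0 that]] .
    then show ?thesis using Ck_cong[OF U g(2)] by blast
  qed
  then show ?thesis using g0 unfolding Rsmooth_def by blast
qed

lemma ev_nhds_at: "eventually P (nhds (a::real)) \<Longrightarrow> eventually P (at a)"
  unfolding eventually_at_filter by (auto elim: eventually_mono)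

lemma mvt_between:
  fixes f f' :: "real \<Rightarrow> real"
  assumes "\<And>c. min a b \<le> c \<Longrightarrow> c \<le> max a b \<Longrightarrow> DERIV f c :> f' c"
  shows "\<exists>\<zeta>. min a b \<le> \<zeta> \<and> \<zeta> \<le> max a b \<and> f b - f a = (b - a) * f' \<zeta>"
proof (cases a b rule: linorder_cases)
  case less
  then obtain z where "a < z" "z < b" "f b - f a = (b - a) * f' z"
    using MVT2[of a b f f'] assms by auto
  then show ?thesis using less by (intro exI[of _ z]) auto
next
  case equal
  then show ?thesis by (intro exI[of _ a]) auto
next
  case greater
  then obtain z where "b < z" "z < a" "f a - f b = (a - b) * f' z"
    using MVT2[of b a f f'] assms by auto
  then show ?thesis using greater by (intro exI[of _ z]) (auto simp: algebra_simps)
qed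

lemma chain_C1:
  assumes U: "Ropen n U" and V: "Ropen m V" and hV: "h ` V \<subseteq> U"
    and dphi: "\<And>j. j < n \<Longrightarrow> pd U \<phi> j (d\<phi> j)"
    and dphic: "\<And>j. j < n \<Longrightarrow> Rcontinuous_on n U (d\<phi> j)"
    and dh: "\<And>j. j < n \<Longrightarrow> pd V (\<lambda>s. h s j) i (dh j)"
    and s: "s \<in> V" and i: "i < m"
  shows "((\<lambda>\<sigma>. \<phi> (h (s(i := s i + \<sigma>)))) has_real_derivative (\<Sum>j<n. d\<phi> j (h s) * dh j s)) (at 0)"
proof -
  define y where "y = h s"
  have yU: "y \<in> U" using hV s y_def by auto
  have yR: "y \<in> Rn n" using yU U Ropen_sub by blast
  obtain \<rho> where \<rho>: "\<rho> > 0" "Rball n y \<rho> \<subseteq> U" using Ropen_ball_in[OF U yU] by blast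
  define H where "H \<sigma> = h (s(i := s i + \<sigma>))" for \<sigma>
  have H0: "H 0 = y" by (simp add: H_def y_def)
  have Hd: "((\<lambda>\<sigma>. H \<sigma> j) has_real_derivative dh j s) (at 0)" if "j < n" for j
    using pd_at0[OF dh[OF that] s] by (simp add: H_def)
  have Hc: "((\<lambda>\<sigma>. H \<sigma> j) \<longlongrightarrow> y j) (at 0)" if "j < n" for j
  proof -
    have "isCont (\<lambda>\<sigma>. H \<sigma> j) 0" by (rule DERIV_isCont[OF Hd[OF that]])
    then show ?thesis by (simp add: isCont_def H0)
  qed
  have "((\<lambda>\<sigma>. sqrt (\<Sum>j<n. (y j - H \<sigma> j)\<^sup>2)) \<longlongrightarrow> sqrt (\<Sum>j<n. (y j - y j)\<^sup>2)) (at 0)"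
    by (intro tendsto_intros) (simp add: Hc)
  moreover have "(\<lambda>\<sigma>. Rdist n y (H \<sigma>)) = (\<lambda>\<sigma>. sqrt (\<Sum>j<n. (y j - H \<sigma> j)\<^sup>2))"
    by (simp add: Rdist_def fun_eq_iff)
  moreover have "sqrt (\<Sum>j<n. (y j - y j)\<^sup>2) = 0" by simp
  ultimately have Rd: "((\<lambda>\<sigma>. Rdist n y (H \<sigma>)) \<longlongrightarrow> 0) (at 0)"
    by simp
  have evV: "eventually (\<lambda>\<sigma>. s(i := s i + \<sigma>) \<in> V) (at 0)"
    by (rule ev_nhds_at[OF Ropen_upd_eventually[OF V s i]])
  have ev\<rho>: "eventually (\<lambda>\<sigma>. Rdist n y (H \<sigma>) < \<rho>) (at 0)"
    using order_tendstoD(2)[OF Rd \<rho>(1)] .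
  define good where "good \<sigma> \<longleftrightarrow> s(i := s i + \<sigma>) \<in> V \<and> Rdist n y (H \<sigma>) < \<rho>" for \<sigma>
  have evgood: "eventually good (at 0)"
    using evV ev\<rho> unfolding good_def by eventually_elim auto
  have HU: "H \<sigma> \<in> U" if "good \<sigma>" for \<sigma>
    using that hV unfolding good_def H_def by auto
  have HR: "H \<sigma> \<in> Rn n" if "good \<sigma>" for \<sigma>
    using HU[OF that] U Ropen_sub by blast
  define z where "z k \<sigma> = (\<lambda>j. if j < k then H \<sigma> j else y j)" for k \<sigma>
  define P where "P k \<sigma> \<xi> \<longleftrightarrow> \<xi> \<in> U \<and> Rdist n y \<xi> \<le> Rdist n y (H \<sigma>) \<and>
        \<phi> (z (Suc k) \<sigma>) - \<phi> (z k \<sigma>) = (H \<sigma> k - y k) * d\<phi> k \<xi>" for k \<sigma> \<xi>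
  have exP: "\<exists>\<xi>. P k \<sigma> \<xi>" if g: "good \<sigma>" and k: "k < n" for k \<sigma>
  proof -
    define w where "w = z k \<sigma>"
    have wR: "w \<in> Rn n" using yR k unfolding w_def z_def Rn_def by auto
    have wk: "w k = y k" by (simp add: w_def z_def)
    have xin: "w(k := c) \<in> U \<and> Rdist n y (w(k := c)) \<le> Rdist n y (H \<sigma>)"
      if "min (y k) (H \<sigma> k) \<le> c" "c \<le> max (y k) (H \<sigma> k)" for c
    proof -
      have le: "Rdist n y (w(k := c)) \<le> Rdist n y (H \<sigma>)"
      proof (rule Rdist_mono_coord)
        fix j assume "j < n"
        show "\<bar>y j - (w(k := c)) j\<bar> \<le> \<bar>y j - H \<sigma> j\<bar>"
          using that by (cases "j = k"; cases "j < k") (auto simp: w_def z_def)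
      qed
      moreover have "w(k := c) \<in> Rn n" using Rn_upd[OF wR k] .
      ultimately have "w(k := c) \<in> Rball n y \<rho>" using g unfolding good_def Rball_def by auto
      then show ?thesis using \<rho>(2) le by auto
    qed
    have der: "DERIV (\<lambda>c. \<phi> (w(k := c))) c :> d\<phi> k (w(k := c))"
      if "min (y k) (H \<sigma> k) \<le> c" "c \<le> max (y k) (H \<sigma> k)" for c
    proof -
      have xU: "w(k := c) \<in> U" using xin[OF that] by blast
      have "((\<lambda>t. \<phi> ((w(k := c))(k := (w(k := c)) k + t))) has_real_derivative d\<phi> k (w(k := c))) (at 0)"
        using pd_at0[OF dphi[OF k] xU] .
      then have "((\<lambda>t. \<phi> (w(k := t + c))) has_real_derivative d\<phi> k (w(k := c))) (at 0)"
        by (simp add: add.commute)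
      then show ?thesis using DERIV_shift[of "\<lambda>c. \<phi> (w(k := c))" "d\<phi> k (w(k := c))" 0 c] by simp
    qed
    obtain \<zeta> where \<zeta>: "min (y k) (H \<sigma> k) \<le> \<zeta>" "\<zeta> \<le> max (y k) (H \<sigma> k)"
      "\<phi> (w(k := H \<sigma> k)) - \<phi> (w(k := y k)) = (H \<sigma> k - y k) * d\<phi> k (w(k := \<zeta>))"
      using mvt_between[of "y k" "H \<sigma> k" "\<lambda>c. \<phi> (w(k := c))" "\<lambda>c. d\<phi> k (w(k := c))"] der by blast
    have "w(k := y k) = z k \<sigma>" using wk by (auto simp: w_def)
    moreover have "w(k := H \<sigma> k) = z (Suc k) \<sigma>" by (auto simp: w_def z_def)
    ultimately show ?thesis using \<zeta> xin[OF \<zeta>(1,2)] unfolding P_def by auto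
  qed
  define \<xi> where "\<xi> k \<sigma> = (SOME \<xi>. P k \<sigma> \<xi>)" for k \<sigma>
  have P\<xi>: "P k \<sigma> (\<xi> k \<sigma>)" if "good \<sigma>" "k < n" for k \<sigma>
    unfolding \<xi>_def using exP[OF that] by (rule someI_ex)
  have tele: "\<phi> (H \<sigma>) - \<phi> y = (\<Sum>k<n. (H \<sigma> k - y k) * d\<phi> k (\<xi> k \<sigma>))" if g: "good \<sigma>" for \<sigma>
  proof -
    have zn: "z n \<sigma> = H \<sigma>"
    proof
      fix j show "z n \<sigma> j = H \<sigma> j"
        using HR[OF g] yR by (cases "j < n") (auto simp: z_def Rn_def)
    qed
    have z0: "z 0 \<sigma> = y" by (auto simp: z_def)
    have "\<phi> (H \<sigma>) - \<phi> y = (\<Sum>k<n. \<phi> (z (Suc k) \<sigma>) - \<phi> (z k \<sigma>))"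
      by (subst sum_lessThan_telescope) (simp add: zn z0)
    also have "\<dots> = (\<Sum>k<n. (H \<sigma> k - y k) * d\<phi> k (\<xi> k \<sigma>))"
      using P\<xi>[OF g] unfolding P_def by (intro sum.cong) auto
    finally show ?thesis .
  qed
  have lim1: "((\<lambda>\<sigma>. d\<phi> k (\<xi> k \<sigma>)) \<longlongrightarrow> d\<phi> k y) (at 0)" if k: "k < n" for k
  proof -
    have "filterlim (\<xi> k) (Rnhds n U y) (at 0)"
      unfolding filterlim_def le_filter_def eventually_filtermap
    proof (intro allI impI)
      fix Q assume "eventually Q (Rnhds n U y)"
      then obtain e where e: "e > 0" "\<forall>x\<in>U. Rdist n y x < e \<longrightarrow> Q x"
        unfolding eventually_Rnhds by blast
      show "eventually (\<lambda>\<sigma>. Q (\<xi> k \<sigma>)) (at 0)"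
        using evgood order_tendstoD(2)[OF Rd e(1)]
      proof eventually_elim
        case (elim \<sigma>)
        then show ?case using P\<xi>[OF elim(1) k] e(2) unfolding P_def by auto
      qed
    qed
    moreover have "(d\<phi> k \<longlongrightarrow> d\<phi> k y) (Rnhds n U y)"
      using Rcontinuous_onD[OF dphic[OF k] yU] .
    ultimately show ?thesis by (rule filterlim_compose[rotated])
  qed
  have lim2: "((\<lambda>\<sigma>. (H \<sigma> k - y k) / \<sigma>) \<longlongrightarrow> dh k s) (at 0)" if k: "k < n" for k
    using Hd[OF k] unfolding has_field_derivative_iff by (simp add: H0)
  have lim: "((\<lambda>\<sigma>. \<Sum>k<n. d\<phi> k (\<xi> k \<sigma>) * ((H \<sigma> k - y k) / \<sigma>)) \<longlongrightarrow> (\<Sum>k<n. d\<phi> k y * dh k s)) (at 0)"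
    by (intro tendsto_sum tendsto_mult lim1 lim2) auto
  have "eventually (\<lambda>\<sigma>. (\<Sum>k<n. d\<phi> k (\<xi> k \<sigma>) * ((H \<sigma> k - y k) / \<sigma>)) = (\<phi> (H \<sigma>) - \<phi> (H 0)) / (\<sigma> - 0)) (at 0)"
    using evgood
  proof eventually_elim
    case (elim \<sigma>)
    have "(\<phi> (H \<sigma>) - \<phi> (H 0)) / (\<sigma> - 0) = (\<Sum>k<n. (H \<sigma> k - y k) * d\<phi> k (\<xi> k \<sigma>)) / \<sigma>"
      using tele[OF elim] by (simp add: H0)
    also have "\<dots> = (\<Sum>k<n. d\<phi> k (\<xi> k \<sigma>) * ((H \<sigma> k - y k) / \<sigma>))"
      by (simp add: sum_divide_distrib mult.commute)
    finally show ?case by simp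
  qed
  with lim have "((\<lambda>\<sigma>. (\<phi> (H \<sigma>) - \<phi> (H 0)) / (\<sigma> - 0)) \<longlongrightarrow> (\<Sum>k<n. d\<phi> k y * dh k s)) (at 0)"
    by (rule Lim_transform_eventually)
  then have "((\<lambda>\<sigma>. \<phi> (H \<sigma>)) has_real_derivative (\<Sum>k<n. d\<phi> k y * dh k s)) (at 0)"
    unfolding has_field_derivative_iff .
  then show ?thesis by (simp add: H_def y_def)
qed

lemma Ck_comp:
  assumes U: "Ropen n U" and V: "Ropen m V" and hV: "h ` V \<subseteq> U"
    and hs: "\<And>j. j < n \<Longrightarrow> Rsmooth m V (\<lambda>s. h s j)"
  shows "Ck n k U \<phi> \<Longrightarrow> Ck m k V (\<lambda>s. \<phi> (h s))"
proof (induction k arbitrary: \<phi>)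
  case 0
  then show ?case using Rcontinuous_on_compose[OF _ Rsmooth_cont[OF hs] hV] by simp
next
  case (Suc k)
  show ?case unfolding Ck_Suc_iff
  proof (intro conjI allI impI)
    show "Rcontinuous_on m V (\<lambda>s. \<phi> (h s))"
      using Rcontinuous_on_compose[OF Ck_cont[OF Suc.prems] Rsmooth_cont[OF hs] hV] .
    fix i assume i: "i < m"
    have "\<forall>j\<in>{..<n}. \<exists>g. pd U \<phi> j g \<and> Ck n k U g" using Suc.prems unfolding Ck_Suc_iff by auto
    then obtain d\<phi> where d\<phi>: "\<forall>j\<in>{..<n}. pd U \<phi> j (d\<phi> j) \<and> Ck n k U (d\<phi> j)"
      by (rule bchoice[elim_format]) blast
    have "\<forall>j\<in>{..<n}. \<exists>g. pd V (\<lambda>s. h s j) i g \<and> Rsmooth m V g"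
      using Rsmooth_partial[OF V hs i] by auto
    then obtain dh where dh: "\<forall>j\<in>{..<n}. pd V (\<lambda>s. h s j) i (dh j) \<and> Rsmooth m V (dh j)"
      by (rule bchoice[elim_format]) blast
    have d\<phi>c: "\<And>j. j < n \<Longrightarrow> Rcontinuous_on n U (d\<phi> j)" using d\<phi> Ck_cont by blast
    have "pd V (\<lambda>s. \<phi> (h s)) i (\<lambda>s. \<Sum>j<n. d\<phi> j (h s) * dh j s)"
      unfolding pd_def
    proof
      fix s assume s: "s \<in> V"
      show "((\<lambda>\<sigma>. \<phi> (h (s(i := s i + \<sigma>)))) has_real_derivative (\<Sum>j<n. d\<phi> j (h s) * dh j s)) (at 0)"
        by (rule chain_C1[OF U V hV _ _ _ s i]) (use d\<phi> dh d\<phi>c in auto)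
    qed
    moreover have "Ck m k V (\<lambda>s. \<Sum>j<n. d\<phi> j (h s) * dh j s)"
      by (intro Ck_sum Ck_mult) (use d\<phi> dh Suc.IH Rsmooth_Ck in auto)
    ultimately show "\<exists>g. pd V (\<lambda>s. \<phi> (h s)) i g \<and> Ck m k V g" by blast
  qed
qed

lemma Rsmooth_comp:
  assumes U: "Ropen n U" and V: "Ropen m V" and hV: "h ` V \<subseteq> U"
    and hs: "\<And>j. j < n \<Longrightarrow> Rsmooth m V (\<lambda>s. h s j)"
    and f: "Rsmooth n U \<phi>"
  shows "Rsmooth m V (\<lambda>s. \<phi> (h s))"
  using Ck_comp[OF U V hV hs] f unfolding Rsmooth_def by blast

definition U1 :: "(nat \<Rightarrow> real) set" where "U1 = {x \<in> Rn 1. 0 < x 0}"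

lemma Ropen_U1: "Ropen 1 U1"
  unfolding Ropen_def
proof (intro conjI ballI)
  show "U1 \<subseteq> Rn 1" by (auto simp: U1_def)
  fix x assume x: "x \<in> U1"
  have "Rball 1 x (x 0) \<subseteq> U1"
  proof
    fix y assume y: "y \<in> Rball 1 x (x 0)"
    then have "\<bar>x 0 - y 0\<bar> < x 0" using Rdist_coord[of 0 1 x y] by (auto simp: Rball_def)
    then show "y \<in> U1" using y by (auto simp: U1_def Rball_def)
  qed
  then show "\<exists>e>0. Rball 1 x e \<subseteq> U1" using x by (auto simp: U1_def)
qed

lemma Ck_powr: "Ck 1 k U1 (\<lambda>x. c * x 0 powr q)"
proof (induction k arbitrary: c q)
  case 0
  have "Rcontinuous_on 1 U1 (\<lambda>x. c * x 0 powr q)"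
  proof (rule Rcontinuous_onI)
    fix x assume x: "x \<in> U1"
    then have "x 0 \<noteq> 0" by (auto simp: U1_def)
    have "((\<lambda>y. y 0) \<longlongrightarrow> x 0) (Rnhds 1 U1 x)" by (rule tendsto_coord_Rnhds) simp
    then show "((\<lambda>x. c * x 0 powr q) \<longlongrightarrow> c * x 0 powr q) (Rnhds 1 U1 x)"
      using \<open>x 0 \<noteq> 0\<close> by (intro tendsto_intros) auto
  qed
  then show ?case by simp
next
  case (Suc k)
  show ?case unfolding Ck_Suc_iff
  proof (intro conjI allI impI)
    show "Rcontinuous_on 1 U1 (\<lambda>x. c * x 0 powr q)" using Ck_cont[OF Suc.IH] .
    fix i :: nat assume "i < 1"
    then have i0: "i = 0" by simp
    have "pd U1 (\<lambda>x. c * x 0 powr q) i (\<lambda>x. (c * q) * x 0 powr (q - 1))"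
      unfolding pd_def i0
    proof
      fix x assume x: "x \<in> U1"
      then have "0 < x 0" by (simp add: U1_def)
      then have "((\<lambda>s. s powr q) has_real_derivative q * (0 + x 0) powr (q - 1)) (at (0 + x 0))"
        using has_real_derivative_powr by simp
      then have "((\<lambda>s. (s + x 0) powr q) has_real_derivative q * (0 + x 0) powr (q - 1)) (at 0)"
        by (rule DERIV_shift[THEN iffD1])
      then have "((\<lambda>s. c * (s + x 0) powr q) has_real_derivative c * (q * (0 + x 0) powr (q - 1))) (at 0)"
        by (rule DERIV_cmult)
      then show "((\<lambda>s. c * (x(0 := x 0 + s)) 0 powr q) has_real_derivative c * q * x 0 powr (q - 1)) (at 0)"
        by (simp add: add.commute mult.assoc)
    qed
    then show "\<exists>g. pd U1 (\<lambda>x. c * x 0 powr q) i g \<and> Ck 1 k U1 g" using Suc.IH by blast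
  qed
qed

lemma Rsmooth_sqrt_U1: "Rsmooth 1 U1 (\<lambda>x. sqrt (x 0))"
proof -
  have "Rsmooth 1 U1 (\<lambda>x. 1 * x 0 powr (1/2))" unfolding Rsmooth_def using Ck_powr by blast
  then show ?thesis
    by (rule Rsmooth_cong[OF Ropen_U1]) (simp add: U1_def powr_half_sqrt)
qed

lemma Rsmooth_sqrt:
  assumes V: "Ropen m V" and f: "Rsmooth m V f" and pos: "\<And>s. s \<in> V \<Longrightarrow> 0 < f s"
  shows "Rsmooth m V (\<lambda>s. sqrt (f s))"
proof -
  define h where "h s = (\<lambda>j::nat. if j = 0 then f s else 0)" for s
  have hV: "h ` V \<subseteq> U1" using pos by (auto simp: h_def U1_def Rn_def)
  have hs: "Rsmooth m V (\<lambda>s. h s j)" if "j < 1" for j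
    using that f by (simp add: h_def)
  have "Rsmooth m V (\<lambda>s. sqrt (h s 0))"
    using Rsmooth_comp[OF Ropen_U1 V hV hs Rsmooth_sqrt_U1] .
  then show ?thesis by (simp add: h_def)
qed

lemma Rsmooth_Rdist:
  assumes V: "Ropen n V" and pos: "\<And>t. t \<in> V \<Longrightarrow> 0 < Rdist n a t"
  shows "Rsmooth n V (\<lambda>t. Rdist n a t)"
proof -
  have sm: "Rsmooth n V (\<lambda>t. \<Sum>i<n. (a i - t i) * (a i - t i))"
    by (intro Rsmooth_sum Rsmooth_mult Rsmooth_diff Rsmooth_const Rsmooth_coord) auto
  have pos': "0 < (\<Sum>i<n. (a i - t i) * (a i - t i))" if "t \<in> V" for t
    using pos[OF that] by (simp add: Rdist_def power2_eq_square)
  show ?thesis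
    using Rsmooth_sqrt[OF V sm pos'] by (simp add: Rdist_def power2_eq_square)
qed

abbreviation tt where "tt \<equiv> translate_tiling"

lemma img_img_transl: "(\<lambda>y. y + b) ` ((\<lambda>y. y + a) ` t) = (\<lambda>y. y + (a + b)) ` (t::'a::real_vector set)"
  by (auto simp: image_image add.assoc)

lemma tt_tt: "tt (tt X a) b = tt X (a + b)"
  unfolding translate_tiling_def image_image by (simp add: add.assoc)

lemma img_transl_0[simp]: "(\<lambda>y. y + 0) ` (t::'a::real_vector set) = t" by simp

lemma tt_0[simp]: "tt X 0 = X"
  unfolding translate_tiling_def by simp

lemma transl_inj: "(\<lambda>y. y + a) ` s = (\<lambda>y. y + a) ` t \<Longrightarrow> s = (t::'a::real_vector set)"
proof -
  assume "(\<lambda>y. y + a) ` s = (\<lambda>y. y + a) ` t"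
  then have "(\<lambda>y. y + (-a)) ` ((\<lambda>y. y + a) ` s) = (\<lambda>y. y + (-a)) ` ((\<lambda>y. y + a) ` t)" by simp
  then show ?thesis by (simp add: image_image)
qed

lemma mem_transl: "x \<in> (\<lambda>y. y + a) ` t \<longleftrightarrow> x - a \<in> (t::'a::real_vector set)"
  by (auto simp: image_iff) (metis diff_add_cancel)

lemma mem_tt: "s \<in> tt X a \<longleftrightarrow> (\<exists>t\<in>X. s = (\<lambda>y. y + a) ` t)"
  by (auto simp: translate_tiling_def)

lemma patch_sub: "S \<subseteq> S' \<Longrightarrow> patch (patch X S') S = patch X S"
  unfolding patch_def by auto

lemma patch_eq_sub: "patch X S' = patch Y S' \<Longrightarrow> S \<subseteq> S' \<Longrightarrow> patch X S = patch Y S"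
  by (metis patch_sub)

lemma patch_tt_eq:
  assumes "patch X ((\<lambda>y. y - a) ` S) = patch Y ((\<lambda>y. y - a) ` S)"
  shows "patch (tt X a) S = patch (tt Y a) (S::'a::real_vector set)"
proof -
  have key: "patch (tt Z a) S = (\<lambda>t. (\<lambda>y. y + a) ` t) ` patch Z ((\<lambda>y. y - a) ` S)" for Z :: "'a set set"
  proof -
    have "(\<lambda>y. y + a) ` t \<inter> S \<noteq> {} \<longleftrightarrow> t \<inter> (\<lambda>y. y - a) ` S \<noteq> {}" for t
    proof
      assume "(\<lambda>y. y + a) ` t \<inter> S \<noteq> {}"
      then obtain x where x: "x \<in> t" "x + a \<in> S" by auto
      have "x \<in> (\<lambda>y. y - a) ` S" using x(2) by (intro image_eqI[where x="x+a"]) simp_all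
      then show "t \<inter> (\<lambda>y. y - a) ` S \<noteq> {}" using x(1) by blast
    next
      assume "t \<inter> (\<lambda>y. y - a) ` S \<noteq> {}"
      then obtain x where x: "x \<in> S" "x - a \<in> t" by auto
      have "x \<in> (\<lambda>y. y + a) ` t" using x(2) by (intro image_eqI[where x="x-a"]) simp_all
      then show "(\<lambda>y. y + a) ` t \<inter> S \<noteq> {}" using x(1) by blast
    qed
    then show ?thesis unfolding patch_def translate_tiling_def by auto
  qed
  show ?thesis using assms by (simp add: key)
qed

section \<open>Tilings\<close>

lemma is_tiling_D1: "is_tiling X \<Longrightarrow> \<exists>P. finite P \<and> (\<forall>t\<in>X. \<exists>\<tau>\<in>P. \<exists>x. t = (\<lambda>y. y + x) ` \<tau>)"
  unfolding is_tiling_def by (elim conjE) assumption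
lemma is_tiling_D2: "is_tiling X \<Longrightarrow> t \<in> X \<Longrightarrow> t homeomorphic cball (0::'a) 1"
  for X :: "'a::euclidean_space set set"
  unfolding is_tiling_def by (elim conjE) (erule bspec)
lemma is_tiling_D3: "is_tiling X \<Longrightarrow> \<Union>X = UNIV"
  unfolding is_tiling_def by (elim conjE) assumption
lemma is_tiling_D4: "is_tiling X \<Longrightarrow> t \<in> X \<Longrightarrow> t' \<in> X \<Longrightarrow> t \<noteq> t' \<Longrightarrow> interior t \<inter> interior t' = {}"
  for X :: "'a::euclidean_space set set"
proof -
  assume X: "is_tiling X" and t: "t \<in> X" "t' \<in> X" "t \<noteq> t'"
  have "\<forall>t\<in>X. \<forall>t'\<in>X. t \<noteq> t' \<longrightarrow> interior t \<inter> interior t' = {}"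
    using X unfolding is_tiling_def by (elim conjE) assumption
  then show ?thesis using t by simp
qed
lemma is_tilingI:
  "finite P \<Longrightarrow> (\<forall>t\<in>X. \<exists>\<tau>\<in>P. \<exists>x. t = (\<lambda>y. y + x) ` \<tau>) \<Longrightarrow> (\<forall>t\<in>X. t homeomorphic cball (0::'a) 1) \<Longrightarrow>
   \<Union>X = UNIV \<Longrightarrow> (\<forall>t\<in>X. \<forall>t'\<in>X. t \<noteq> t' \<longrightarrow> interior t \<inter> interior t' = {}) \<Longrightarrow> is_tiling X"
  for X :: "'a::euclidean_space set set"
  unfolding is_tiling_def by (intro conjI exI[of _ P]) assumption+

lemma tiling_homeo: "is_tiling X \<Longrightarrow> t \<in> X \<Longrightarrow> t homeomorphic cball (0::'a::euclidean_space) 1"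
  for X :: "'a::euclidean_space set set"
  by (rule is_tiling_D2)

lemma tile_compact: "is_tiling X \<Longrightarrow> t \<in> X \<Longrightarrow> compact (t::'a::euclidean_space set)"
  for X :: "'a::euclidean_space set set"
  using tiling_homeo homeomorphic_compactness compact_cball by blast

lemma tile_nonempty: "is_tiling X \<Longrightarrow> t \<in> X \<Longrightarrow> t \<noteq> ({}::'a::euclidean_space set)"
  for X :: "'a::euclidean_space set set"
proof
  assume "is_tiling X" "t \<in> X" "t = {}"
  then have "{} homeomorphic cball (0::'a) 1" using tiling_homeo by blast
  then show False by simp
qed

lemma is_tiling_tt:
  fixes X :: "'a::euclidean_space set set"
  assumes X: "is_tiling X"
  shows "is_tiling (tt X a)"
proof -
  obtain P where P: "finite P" "\<forall>t\<in>X. \<exists>\<tau>\<in>P. \<exists>x. t = (\<lambda>y. y + x) ` \<tau>"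
    using is_tiling_D1[OF X] by blast
  have 1: "\<forall>t\<in>tt X a. \<exists>\<tau>\<in>P. \<exists>x. t = (\<lambda>y. y + x) ` \<tau>"
  proof
    fix s assume "s \<in> tt X a"
    then obtain t where t: "t \<in> X" "s = (\<lambda>y. y + a) ` t" by (auto simp: mem_tt)
    then obtain \<tau> x where "\<tau> \<in> P" "t = (\<lambda>y. y + x) ` \<tau>" using P by blast
    moreover have "s = (\<lambda>y. y + (x + a)) ` \<tau>" using t(2) \<open>t = (\<lambda>y. y + x) ` \<tau>\<close> img_img_transl by metis
    ultimately show "\<exists>\<tau>\<in>P. \<exists>x. s = (\<lambda>y. y + x) ` \<tau>" by blast
  qed
  have 2: "\<forall>t\<in>tt X a. t homeomorphic cball (0::'a) 1"
  proof
    fix s assume "s \<in> tt X a"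
    then obtain t where t: "t \<in> X" "s = (\<lambda>y. y + a) ` t" by (auto simp: mem_tt)
    have "t homeomorphic (\<lambda>y. a + y) ` t" by (rule homeomorphic_translation)
    moreover have "(\<lambda>y. a + y) ` t = s" unfolding t(2) by (intro image_cong refl) (simp add: add.commute)
    ultimately have "t homeomorphic s" by simp
    then have "s homeomorphic t" by (rule homeomorphic_sym[THEN iffD1])
    then show "s homeomorphic cball (0::'a) 1" using tiling_homeo[OF X t(1)] homeomorphic_trans by blast
  qed
  have 3: "\<Union>(tt X a) = UNIV"
  proof -
    have "z \<in> \<Union>(tt X a)" for z
    proof -
      have "z - a \<in> \<Union>X" using is_tiling_D3[OF X] by simp
      then obtain t where t: "t \<in> X" "z - a \<in> t" by auto
      have "z \<in> (\<lambda>y. y + a) ` t" using t(2) by (simp only: mem_transl)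
      moreover have "(\<lambda>y. y + a) ` t \<in> tt X a" using t(1) unfolding mem_tt by blast
      ultimately show ?thesis by blast
    qed
    then show ?thesis by auto
  qed
  have 4: "\<forall>t\<in>tt X a. \<forall>t'\<in>tt X a. t \<noteq> t' \<longrightarrow> interior t \<inter> interior t' = {}"
  proof (intro ballI impI)
    fix s s' assume "s \<in> tt X a" "s' \<in> tt X a" "s \<noteq> s'"
    then obtain t t' where t: "t \<in> X" "s = (\<lambda>y. y + a) ` t" "t' \<in> X" "s' = (\<lambda>y. y + a) ` t'"
      by (auto simp: mem_tt)
    then have "t \<noteq> t'" using \<open>s \<noteq> s'\<close> by auto
    then have disj: "interior t \<inter> interior t' = {}" using is_tiling_D4[OF X t(1) t(3)] by blast
    have e: "(\<lambda>y. y + a) ` S = (+) a ` S" for S :: "'a set" by (intro image_cong refl) (simp add: add.commute)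
    have "interior s = (+) a ` interior t" "interior s' = (+) a ` interior t'"
      unfolding t(2) t(4) e by (rule interior_translation)+
    then show "interior s \<inter> interior s' = {}" using disj by auto
  qed
  show ?thesis by (rule is_tilingI[OF P(1) 1 2 3 4])
qed

lemma tile_ball:
  assumes X: "is_tiling (X::'a::euclidean_space set set)"
  shows "\<exists>\<rho>>0. \<forall>t\<in>X. \<exists>z. ball z \<rho> \<subseteq> t"
proof -
  obtain P where P: "finite P" "\<forall>t\<in>X. \<exists>\<tau>\<in>P. \<exists>x. t = (\<lambda>y. y + x) ` \<tau>"
    using is_tiling_D1[OF X] by blast
  define G where "G = {\<tau>\<in>P. \<exists>t\<in>X. \<exists>x. t = (\<lambda>y. y + x) ` \<tau>}"
  have "\<exists>\<rho>>0. \<exists>z. ball z \<rho> \<subseteq> \<tau>" if \<tau>G: "\<tau> \<in> G" for \<tau>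
  proof -
    obtain t x where tx: "t \<in> X" "t = (\<lambda>y. y + x) ` \<tau>" using \<tau>G G_def by blast
    obtain f g where hom: "homeomorphism (cball (0::'a) 1) t f g"
      using tiling_homeo[OF X tx(1)] homeomorphic_sym unfolding homeomorphic_def by blast
    have cont: "continuous_on (ball 0 1) f"
      using hom unfolding homeomorphism_def by (meson ball_subset_cball continuous_on_subset)
    have inj: "inj_on f (ball 0 1)"
      using hom unfolding homeomorphism_def by (metis ball_subset_cball inj_on_def subsetD)
    have op: "open (f ` ball 0 1)" using invariance_of_domain[OF cont open_ball inj] .
    have sub: "f ` ball 0 1 \<subseteq> t" using hom unfolding homeomorphism_def by auto
    have "f 0 \<in> f ` ball 0 1" by simp
    then obtain e where e: "e > 0" "ball (f 0) e \<subseteq> f ` ball 0 1" using op open_contains_ball by blast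
    have "ball (f 0 - x) e \<subseteq> \<tau>"
    proof
      fix w assume "w \<in> ball (f 0 - x) e"
      then have "w + x \<in> ball (f 0) e" by (simp add: dist_norm algebra_simps)
      then have "w + x \<in> t" using e sub by blast
      then show "w \<in> \<tau>" using tx(2) by (auto simp: mem_transl)
    qed
    then show ?thesis using e by blast
  qed
  then obtain \<rho>f where \<rho>f: "\<forall>\<tau>\<in>G. \<rho>f \<tau> > 0 \<and> (\<exists>z. ball z (\<rho>f \<tau>) \<subseteq> \<tau>)"
    by (metis (mono_tags))
  define \<rho> where "\<rho> = Min (insert 1 (\<rho>f ` G))"
  have fin: "finite (insert 1 (\<rho>f ` G))" using P(1) G_def by auto
  have \<rho>pos: "\<rho> > 0" unfolding \<rho>_def using fin \<rho>f by (subst Min_gr_iff) auto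
  have \<rho>le: "\<rho> \<le> \<rho>f \<tau>" if "\<tau> \<in> G" for \<tau> unfolding \<rho>_def using fin that by auto
  have "\<forall>t\<in>X. \<exists>z. ball z \<rho> \<subseteq> t"
  proof
    fix t assume t: "t \<in> X"
    then obtain \<tau> x where \<tau>: "\<tau> \<in> P" "t = (\<lambda>y. y + x) ` \<tau>" using P by blast
    then have "\<tau> \<in> G" using t G_def by blast
    then obtain z where z: "ball z (\<rho>f \<tau>) \<subseteq> \<tau>" using \<rho>f by blast
    have "ball (z + x) \<rho> \<subseteq> t"
    proof
      fix w assume "w \<in> ball (z + x) \<rho>"
      then have "w - x \<in> ball z (\<rho>f \<tau>)" using \<rho>le[OF \<open>\<tau> \<in> G\<close>] by (simp add: dist_norm algebra_simps)
      then show "w \<in> t" using z \<tau>(2) by (auto simp: mem_transl)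
    qed
    then show "\<exists>z. ball z \<rho> \<subseteq> t" by blast
  qed
  then show ?thesis using \<rho>pos by blast
qed

lemma transl_fix_zero:
  assumes "compact (t::'a::euclidean_space set)" "t \<noteq> {}" "(\<lambda>y. y + c) ` t = t"
  shows "c = 0"
proof (rule ccontr)
  assume "c \<noteq> 0"
  have "continuous_on t (\<lambda>y. inner c y)" by (intro continuous_intros)
  then obtain z where z: "z \<in> t" "\<forall>y\<in>t. inner c y \<le> inner c z"
    using continuous_attains_sup[OF assms(1,2)] by blast
  have "z + c \<in> t" using z(1) assms(3) by blast
  then have "inner c (z + c) \<le> inner c z" using z(2) by blast
  then have "inner c c \<le> 0" by (simp add: inner_add_right)
  then show False using \<open>c \<noteq> 0\<close> by (metis inner_gt_zero_iff not_le)
qed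

definition gap :: "'a::euclidean_space set set \<Rightarrow> real \<Rightarrow> bool" where
  "gap X \<eta> \<longleftrightarrow> \<eta> > 0 \<and> (\<forall>r v v'. 0 \<le> r \<longrightarrow> patch (tt X v) (cball 0 r) = patch (tt X v') (cball 0 r)
      \<longrightarrow> v = v' \<or> \<eta> \<le> norm (v - v'))"

lemma gap_exists:
  assumes X: "is_tiling (X::'a::euclidean_space set set)"
  shows "\<exists>\<eta>. gap X \<eta>"
proof -
  obtain \<rho> where \<rho>: "\<rho> > 0" "\<forall>t\<in>X. \<exists>z. ball z \<rho> \<subseteq> t" using tile_ball[OF X] by blast
  have "v = v' \<or> \<rho> \<le> norm (v - v')"
    if r: "0 \<le> r" and eq: "patch (tt X v) (cball 0 r) = patch (tt X v') (cball 0 r)" for r v v'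
  proof (rule ccontr)
    assume "\<not> (v = v' \<or> \<rho> \<le> norm (v - v'))"
    then have ne: "v \<noteq> v'" and small: "norm (v - v') < \<rho>" by auto
    have "(0::'a) \<in> \<Union>(tt X v)" using is_tiling_D3[OF is_tiling_tt[OF X]] by simp
    then obtain \<sigma> where \<sigma>: "\<sigma> \<in> tt X v" "0 \<in> \<sigma>" by auto
    then have "\<sigma> \<in> patch (tt X v) (cball 0 r)" using r by (auto simp: patch_def)
    then have "\<sigma> \<in> patch (tt X v') (cball 0 r)" using eq by simp
    then have "\<sigma> \<in> tt X v'" by (simp add: patch_def)
    obtain \<tau> where \<tau>: "\<tau> \<in> X" "\<sigma> = (\<lambda>y. y + v) ` \<tau>" using \<sigma>(1) by (auto simp: mem_tt)
    obtain \<tau>' where \<tau>': "\<tau>' \<in> X" "\<sigma> = (\<lambda>y. y + v') ` \<tau>'" using \<open>\<sigma> \<in> tt X v'\<close> by (auto simp: mem_tt)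
    define c where "c = v - v'"
    have "(\<lambda>y. y + v') ` \<tau>' = (\<lambda>y. y + v') ` ((\<lambda>y. y + c) ` \<tau>)"
      using \<tau>(2) \<tau>'(2) by (simp add: img_img_transl c_def)
    then have \<tau>'eq: "\<tau>' = (\<lambda>y. y + c) ` \<tau>" by (rule transl_inj)
    show False
    proof (cases "\<tau>' = \<tau>")
      case True
      then have "c = 0" using transl_fix_zero[OF tile_compact[OF X \<tau>(1)] tile_nonempty[OF X \<tau>(1)]] \<tau>'eq by simp
      then show False using ne c_def by simp
    next
      case False
      then have disj: "interior \<tau> \<inter> interior \<tau>' = {}" using is_tiling_D4[OF X \<tau>(1) \<tau>'(1)] by blast
      obtain z where z: "ball z \<rho> \<subseteq> \<tau>" using \<rho>(2) \<tau>(1) by blast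
      have b1: "ball z \<rho> \<subseteq> interior \<tau>" using z by (simp add: interior_maximal)
      have "ball (z + c) \<rho> \<subseteq> \<tau>'"
      proof
        fix w assume "w \<in> ball (z + c) \<rho>"
        then have "w - c \<in> ball z \<rho>" by (simp add: dist_norm algebra_simps)
        then show "w \<in> \<tau>'" using z \<tau>'eq by (auto simp: mem_transl)
      qed
      then have b2: "ball (z + c) \<rho> \<subseteq> interior \<tau>'" by (simp add: interior_maximal)
      have "z + c \<in> ball z \<rho>" using small c_def by (simp add: dist_norm norm_minus_commute)
      moreover have "z + c \<in> ball (z + c) \<rho>" using \<rho>(1) by simp
      ultimately show False using b1 b2 disj by blast
    qed
  qed
  then show ?thesis unfolding gap_def using \<rho>(1) by blast
qed

lemma gapD:
  "gap X \<eta> \<Longrightarrow> 0 \<le> r \<Longrightarrow> patch (tt X v) (cball 0 r) = patch (tt X v') (cball 0 r) \<Longrightarrow> v \<noteq> v' \<Longrightarrow> \<eta> \<le> norm (v - v')"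
  unfolding gap_def by blast

lemma gap_pos: "gap X \<eta> \<Longrightarrow> 0 < \<eta>" by (simp add: gap_def)

section \<open>d_r\<close>

lemma Inf_ereal_gt:
  assumes "0 \<le> m"
  shows "Inf (ereal ` {\<epsilon>. \<epsilon> > 0 \<and> m < \<epsilon>}) = ereal m"
proof (rule antisym)
  show "ereal m \<le> Inf (ereal ` {\<epsilon>. \<epsilon> > 0 \<and> m < \<epsilon>})"
    by (rule Inf_greatest) auto
  show "Inf (ereal ` {\<epsilon>. \<epsilon> > 0 \<and> m < \<epsilon>}) \<le> ereal m"
  proof (rule ccontr)
    assume "\<not> ?thesis"
    then have "ereal m < Inf (ereal ` {\<epsilon>. \<epsilon> > 0 \<and> m < \<epsilon>})" by simp
    then obtain z where z: "ereal m < ereal z" "ereal z < Inf (ereal ` {\<epsilon>. \<epsilon> > 0 \<and> m < \<epsilon>})"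
      using ereal_dense2 by blast
    then have "z \<in> {\<epsilon>. \<epsilon> > 0 \<and> m < \<epsilon>}" using assms by auto
    then have "Inf (ereal ` {\<epsilon>. \<epsilon> > 0 \<and> m < \<epsilon>}) \<le> ereal z" by (intro Inf_lower) auto
    then show False using z(2) by simp
  qed
qed

lemma dr_tt:
  assumes g: "gap X \<eta>" and r: "0 \<le> r" and small: "norm (b - a) < \<eta> / 2"
  shows "dr r (tt X a) (tt X b) = ereal (norm (b - a))"
proof -
  have E: "{\<epsilon>. \<epsilon> > 0 \<and> (\<exists>u. norm u < \<epsilon> \<and> patch (tt (tt X a) u) (cball 0 r) = patch (tt X b) (cball 0 r))}
      = {\<epsilon>. \<epsilon> > 0 \<and> norm (b - a) < \<epsilon>}" (is "?L = ?R")
  proof (intro set_eqI iffI)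
    fix \<epsilon> assume "\<epsilon> \<in> ?L"
    then obtain u where u: "\<epsilon> > 0" "norm u < \<epsilon>" "patch (tt X (a + u)) (cball 0 r) = patch (tt X b) (cball 0 r)"
      by (auto simp: tt_tt)
    show "\<epsilon> \<in> ?R"
    proof (cases "a + u = b")
      case True
      then have "u = b - a" by (simp add: algebra_simps)
      then show ?thesis using u by simp
    next
      case False
      then have "\<eta> \<le> norm (a + u - b)" using gapD[OF g r u(3)] by blast
      also have "\<dots> \<le> norm u + norm (b - a)"
        using norm_triangle_ineq4[of u "b - a"] by (simp add: algebra_simps)
      finally have "norm (b - a) < norm u" using small by simp
      then show ?thesis using u by simp
    qed
  next
    fix \<epsilon> assume "\<epsilon> \<in> ?R"
    then show "\<epsilon> \<in> ?L" by (auto simp: tt_tt intro!: exI[of _ "b - a"])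
  qed
  show ?thesis unfolding dr_def E by (rule Inf_ereal_gt) simp
qed

lemma dr_self:
  assumes X: "is_tiling X" and r: "0 \<le> r"
  shows "dr r X X = 0"
proof -
  obtain \<eta> where g: "gap X \<eta>" using gap_exists[OF X] by blast
  show ?thesis using dr_tt[OF g r, of 0 0] gap_pos[OF g] by (simp add: zero_ereal_def)
qed

lemma dr_lessD:
  assumes "dr r A B < ereal e"
  shows "\<exists>u. norm u < e \<and> patch (tt A u) (cball 0 r) = patch B (cball 0 r)"
proof -
  from assms obtain x where "x \<in> ereal ` {\<epsilon>. \<epsilon> > 0 \<and> (\<exists>u. norm u < \<epsilon> \<and> patch (tt A u) (cball 0 r) = patch B (cball 0 r))}"
    "x < ereal e"
    unfolding dr_def Inf_less_iff by blast
  then obtain \<epsilon> u where "\<epsilon> < e" "norm u < \<epsilon>" "patch (tt A u) (cball 0 r) = patch B (cball 0 r)" by auto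
  then show ?thesis by (intro exI[of _ u]) auto
qed

lemma dr_leI:
  assumes "norm u < e" "patch (tt A u) (cball 0 r) = patch B (cball 0 r)"
  shows "dr r A B \<le> ereal e"
  unfolding dr_def
proof (rule Inf_lower)
  have "0 < e" using assms(1) norm_ge_zero[of u] by linarith
  then show "ereal e \<in> ereal ` {\<epsilon>. \<epsilon> > 0 \<and> (\<exists>u. norm u < \<epsilon> \<and> patch (tt A u) (cball 0 r) = patch B (cball 0 r))}"
    using assms by auto
qed

lemma tiling_eq:
  fixes A B :: "'a::euclidean_space set set"
  assumes A: "is_tiling A" and B: "is_tiling B" and eq: "\<And>r. 1 \<le> r \<Longrightarrow> patch A (cball 0 r) = patch B (cball 0 r)"
  shows "A = B"
proof -
  have *: "t \<in> Y" if Z: "is_tiling Z" and t: "t \<in> Z" and e: "\<And>r. 1 \<le> r \<Longrightarrow> patch Z (cball 0 r) = patch Y (cball 0 r)" for Z Y :: "'a set set" and t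
  proof -
    obtain z where z: "z \<in> t" using tile_nonempty[OF Z t] by blast
    have "t \<in> patch Z (cball 0 (max 1 (norm z)))" using z t by (auto simp: patch_def)
    then have "t \<in> patch Y (cball 0 (max 1 (norm z)))" using e[of "max 1 (norm z)"] by simp
    then show ?thesis by (simp add: patch_def)
  qed
  show ?thesis using *[OF A _ eq] *[OF B _ eq[symmetric]] by blast
qed

lemma tdist_lessD:
  assumes "tdist A B < e" "e \<le> 1 / sqrt 2"
  shows "\<exists>\<epsilon> u v. 0 < \<epsilon> \<and> \<epsilon> < e \<and> norm u < \<epsilon> \<and> norm v < \<epsilon> \<and>
     patch (tt A u) (ball 0 (1/\<epsilon>)) = patch (tt B v) (ball 0 (1/\<epsilon>))"
proof -
  let ?E = "{\<epsilon>. \<epsilon> > 0 \<and> (\<exists>u v. norm u < \<epsilon> \<and> norm v < \<epsilon> \<and>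
        patch (translate_tiling A u) (ball 0 (1/\<epsilon>)) = patch (translate_tiling B v) (ball 0 (1/\<epsilon>)))}"
  have "Inf (?E \<union> {1 / sqrt 2}) < e" using assms(1) by (simp add: tdist_def)
  then obtain x where "x \<in> ?E \<union> {1 / sqrt 2}" "x < e" using cInf_lessD[of "?E \<union> {1 / sqrt 2}" e] by blast
  then have "x \<in> ?E" "x < e" using assms(2) by auto
  then show ?thesis by blast
qed

lemma tdist_leI:
  assumes "0 < \<epsilon>" "norm u < \<epsilon>" "norm v < \<epsilon>"
    "patch (tt A u) (ball 0 (1/\<epsilon>)) = patch (tt B v) (ball 0 (1/\<epsilon>))"
  shows "tdist A B \<le> \<epsilon>"
proof -
  let ?E = "{\<epsilon>. \<epsilon> > 0 \<and> (\<exists>u v. norm u < \<epsilon> \<and> norm v < \<epsilon> \<and>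
        patch (translate_tiling A u) (ball 0 (1/\<epsilon>)) = patch (translate_tiling B v) (ball 0 (1/\<epsilon>)))}"
  have bdd: "bdd_below (?E \<union> {1 / sqrt 2})" by (rule bdd_belowI[of _ 0]) auto
  have mem: "\<epsilon> \<in> ?E \<union> {1 / sqrt 2}" using assms by blast
  have "Inf (?E \<union> {1 / sqrt 2}) \<le> \<epsilon>" by (rule cInf_lower[OF mem bdd])
  then show ?thesis by (simp add: tdist_def)
qed

lemma tiling_space_tt:
  fixes T :: "'a::euclidean_space set set"
  assumes T': "T' \<in> tiling_space T"
  shows "tt T' a \<in> tiling_space T"
proof -
  have T'1: "is_tiling T'" and T'2: "\<forall>t\<in>T'. \<exists>s\<in>T. \<exists>x. t = (\<lambda>y. y + x) ` s"
    and T'3: "\<forall>\<epsilon>>0. \<exists>x. tdist T' (tt T x) < \<epsilon>"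
    using T' unfolding tiling_space_def by auto
  have 2: "\<forall>t\<in>tt T' a. \<exists>s\<in>T. \<exists>x. t = (\<lambda>y. y + x) ` s"
  proof
    fix t assume "t \<in> tt T' a"
    then obtain t0 where t0: "t0 \<in> T'" "t = (\<lambda>y. y + a) ` t0" by (auto simp: mem_tt)
    then obtain s x where "s \<in> T" "t0 = (\<lambda>y. y + x) ` s" using T'2 by blast
    moreover then have "t = (\<lambda>y. y + a) ` ((\<lambda>y. y + x) ` s)" using t0(2) by simp
    then have "t = (\<lambda>y. y + (x + a)) ` s" by (simp only: img_img_transl)
    ultimately show "\<exists>s\<in>T. \<exists>x. t = (\<lambda>y. y + x) ` s" by blast
  qed
  have 3: "\<exists>x. tdist (tt T' a) (tt T x) < \<epsilon>" if \<epsilon>: "\<epsilon> > 0" for \<epsilon>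
  proof -
    define m where "m = min \<epsilon> 1"
    have m: "0 < m" "m \<le> \<epsilon>" "m \<le> 1" using \<epsilon> by (auto simp: m_def)
    define \<epsilon>1 where "\<epsilon>1 = 1 / (1 / m + norm a + 1)"
    have \<epsilon>1pos: "0 < \<epsilon>1" using m by (simp add: \<epsilon>1_def add_pos_nonneg)
    have "1 \<le> 1 / m" using m by simp
    then have "2 \<le> 1 / m + norm a + 1" using norm_ge_zero[of a] by linarith
    then have "\<epsilon>1 \<le> 1 / 2" unfolding \<epsilon>1_def by (simp add: field_simps)
    also have "\<dots> \<le> 1 / sqrt 2"
    proof (rule divide_left_mono)
      have "sqrt 2 \<le> sqrt 4" by (rule real_sqrt_le_mono) simp
      also have "sqrt 4 = (2::real)"
        by (metis abs_numeral real_sqrt_abs power2_eq_square numeral_times_numeral semiring_norm(12) semiring_norm(13))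
      finally show "sqrt 2 \<le> (2::real)" .
    qed auto
    finally have \<epsilon>1le: "\<epsilon>1 \<le> 1 / sqrt 2" .
    obtain x where "tdist T' (tt T x) < \<epsilon>1" using T'3 \<epsilon>1pos by blast
    then obtain e u v where e: "0 < e" "e < \<epsilon>1" "norm u < e" "norm v < e"
      and eq: "patch (tt T' u) (ball 0 (1/e)) = patch (tt (tt T x) v) (ball 0 (1/e))"
      using tdist_lessD[OF _ \<epsilon>1le] by blast
    define R where "R = 1 / e - norm a"
    have "1 / \<epsilon>1 < 1 / e" using e \<epsilon>1pos by (simp add: divide_strict_left_mono)
    then have "1 / m + norm a + 1 < 1 / e" by (simp add: \<epsilon>1_def)
    then have R1: "1 / m + 1 < R" unfolding R_def by simp
    have "1 / \<epsilon> \<le> 1 / m" using m by (simp add: divide_left_mono)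
    then have R2: "1 / \<epsilon> < R" using R1 by simp
    have "0 < 1 / m" using m by simp
    then have Rpos: "0 < R" using R1 by linarith
    define e' where "e' = 1 / R"
    have e'pos: "0 < e'" using Rpos by (simp add: e'_def)
    have "e' < \<epsilon>" using R2 \<epsilon> Rpos unfolding e'_def by (simp add: field_simps)
    have "R \<le> 1 / e" unfolding R_def by simp
    then have "e \<le> e'" unfolding e'_def using e(1) Rpos by (simp add: field_simps)
    have sub: "(\<lambda>y. y - a) ` ball 0 R \<subseteq> ball 0 (1/e)"
    proof
      fix w assume "w \<in> (\<lambda>y. y - a) ` ball 0 R"
      then obtain y where y: "y \<in> ball 0 R" "w = y - a" by auto
      have "norm w \<le> norm y + norm a" using y(2) norm_triangle_ineq4 by blast
      also have "\<dots> < R + norm a" using y(1) by simp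
      finally show "w \<in> ball 0 (1/e)" by (simp add: R_def)
    qed
    have "patch (tt (tt T' u) a) (ball 0 R) = patch (tt (tt (tt T x) v) a) (ball 0 R)"
      by (rule patch_tt_eq[OF patch_eq_sub[OF eq sub]])
    moreover have "tt (tt T' u) a = tt (tt T' a) u" by (simp add: tt_tt add.commute)
    moreover have "tt (tt (tt T x) v) a = tt (tt T (x + a)) v" by (simp add: tt_tt algebra_simps)
    ultimately have "patch (tt (tt T' a) u) (ball 0 (1/e')) = patch (tt (tt T (x + a)) v) (ball 0 (1/e'))"
      by (simp add: e'_def)
    moreover have "norm u < e'" "norm v < e'" using e \<open>e \<le> e'\<close> by auto
    ultimately have "tdist (tt T' a) (tt T (x + a)) \<le> e'"
      using tdist_leI[OF e'pos] by blast
    then show ?thesis using \<open>e' < \<epsilon>\<close> by (intro exI[of _ "x + a"]) simp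
  qed
  show ?thesis unfolding tiling_space_def mem_Collect_eq using is_tiling_tt[OF T'1] 2 3 by (intro conjI allI impI) auto
qed

section \<open>Coordinates\<close>

lemma basis_enum_bij: "bij_betw (basis_enum :: nat \<Rightarrow> 'a) {..<DIM('a::euclidean_space)} Basis"
proof -
  have "\<exists>b. bij_betw b {..<DIM('a)} (Basis::'a set)"
    using ex_bij_betw_nat_finite[of "Basis::'a set"] by (simp add: atLeast0LessThan)
  then show ?thesis unfolding basis_enum_def by (rule someI_ex)
qed

lemma basis_enum_in: "i < DIM('a) \<Longrightarrow> (basis_enum i :: 'a::euclidean_space) \<in> Basis"
  using basis_enum_bij[where 'a='a] by (auto simp: bij_betw_def)

lemma basis_enum_inner:
  assumes "i < DIM('a)" "j < DIM('a)"
  shows "inner (basis_enum i :: 'a::euclidean_space) (basis_enum j) = (if i = j then 1 else 0)"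
proof -
  have inj: "inj_on (basis_enum :: nat \<Rightarrow> 'a) {..<DIM('a)}" using basis_enum_bij[where 'a='a] by (simp add: bij_betw_def)
  show ?thesis using inner_Basis[OF basis_enum_in[OF assms(1)] basis_enum_in[OF assms(2)]] inj assms
    by (auto simp: inj_on_def)
qed

lemma vec_of_inner:
  assumes "i < DIM('a)"
  shows "inner (vec_of x :: 'a::euclidean_space) (basis_enum i) = x i"
proof -
  have "inner (vec_of x :: 'a) (basis_enum i) = (\<Sum>j<DIM('a). x j * inner (basis_enum j :: 'a) (basis_enum i))"
    by (simp add: vec_of_def inner_sum_left)
  also have "\<dots> = (\<Sum>j<DIM('a). if j = i then x i else 0)"
    using assms by (intro sum.cong) (auto simp: basis_enum_inner)
  also have "\<dots> = x i" using assms by simp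
  finally show ?thesis .
qed

lemma sum_Basis_enum: "(\<Sum>b\<in>(Basis::'a::euclidean_space set). f b) = (\<Sum>i<DIM('a). f (basis_enum i))"
  using sum.reindex_bij_betw[OF basis_enum_bij[where 'a='a], of f] by simp

lemma norm_vec_of_diff:
  "norm (vec_of x - vec_of y :: 'a::euclidean_space) = Rdist DIM('a) x y"
proof -
  let ?z = "vec_of x - vec_of y :: 'a"
  have "norm ?z = sqrt (inner ?z ?z)" by (rule norm_eq_sqrt_inner)
  also have "inner ?z ?z = (\<Sum>b\<in>Basis. inner ?z b * inner ?z b)" by (rule euclidean_inner)
  also have "\<dots> = (\<Sum>i<DIM('a). inner ?z (basis_enum i) * inner ?z (basis_enum i))" by (rule sum_Basis_enum)
  also have "\<dots> = (\<Sum>i<DIM('a). (x i - y i)\<^sup>2)"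
    by (intro sum.cong) (auto simp: inner_diff_left vec_of_inner power2_eq_square)
  finally show ?thesis by (simp add: Rdist_def)
qed

definition coords :: "'a::euclidean_space \<Rightarrow> nat \<Rightarrow> real" where
  "coords u = (\<lambda>i. if i < DIM('a) then inner u (basis_enum i) else 0)"

lemma coords_Rn: "coords (u::'a::euclidean_space) \<in> Rn DIM('a)"
  by (simp add: coords_def Rn_def)

lemma vec_of_coords: "vec_of (coords u) = (u::'a::euclidean_space)"
proof -
  have "vec_of (coords u) = (\<Sum>i<DIM('a). inner u (basis_enum i) *\<^sub>R (basis_enum i :: 'a))"
    by (simp add: vec_of_def coords_def)
  also have "\<dots> = (\<Sum>b\<in>Basis. inner u b *\<^sub>R b)" by (rule sum_Basis_enum[symmetric])
  also have "\<dots> = u" by (rule euclidean_representation)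
  finally show ?thesis .
qed

definition condA :: "nat \<Rightarrow> ((nat \<Rightarrow> real) \<Rightarrow> 'a::euclidean_space set set) \<Rightarrow> (nat \<Rightarrow> real) \<Rightarrow> real \<Rightarrow> bool" where
  "condA n p t0 \<delta> \<longleftrightarrow> (\<forall>r>0. Rcontinuous_on n (Rball n t0 \<delta>) (\<lambda>t. dr r (p t0) (p t)))"

definition condB :: "nat \<Rightarrow> (nat \<Rightarrow> real) set \<Rightarrow> ((nat \<Rightarrow> real) \<Rightarrow> 'a::euclidean_space set set) \<Rightarrow> (nat \<Rightarrow> real) \<Rightarrow> real \<Rightarrow> bool" where
  "condB n U p t0 \<delta> \<longleftrightarrow> (\<forall>t1 \<in> Rball n t0 \<delta> - {t\<in>U. p t = p t0}. \<forall>r>0.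
            Rsmooth_at n t0 (Rball n t0 \<delta>) (\<lambda>t. dr r (p t1) (p t)))"

lemma is_param_iff: "is_param X (n, U, p) \<longleftrightarrow> Ropen n U \<and> p \<in> U \<rightarrow>\<^sub>E X"
  by (simp add: is_param_def)

lemma dr_diffeology_iff:
  "(n, U, p) \<in> dr_diffeology T \<longleftrightarrow> is_param (tiling_space T) (n, U, p) \<and>
     (\<forall>t0\<in>U. \<exists>\<delta>>0. Rball n t0 \<delta> \<subseteq> U \<and> condA n p t0 \<delta> \<and> condB n U p t0 \<delta>)"
  unfolding dr_diffeology_def condA_def condB_def by simp

lemma Rsmooth_at_cong:
  assumes "Rsmooth_at n t0 S f" "\<And>t. t \<in> S \<Longrightarrow> f t = g t"
  shows "Rsmooth_at n t0 S g"
proof -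
  obtain V where V: "Ropen n V" "t0 \<in> V" "V \<subseteq> S" "\<forall>t\<in>V. \<bar>f t\<bar> \<noteq> \<infinity>"
    "Rsmooth n V (\<lambda>t. real_of_ereal (f t))" using assms(1) unfolding Rsmooth_at_def by blast
  have "\<forall>t\<in>V. \<bar>g t\<bar> \<noteq> \<infinity>"
  proof
    fix t assume "t \<in> V"
    then have "f t = g t" "\<bar>f t\<bar> \<noteq> \<infinity>" using V(3,4) assms(2) by auto
    then show "\<bar>g t\<bar> \<noteq> \<infinity>" by simp
  qed
  moreover have "Rsmooth n V (\<lambda>t. real_of_ereal (g t))"
    by (rule Rsmooth_cong[OF V(1) V(5)]) (use V(3) assms(2) in auto)
  ultimately show ?thesis unfolding Rsmooth_at_def using V by blast
qed

lemma Rcontinuous_on_ereal: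
  "Rcontinuous_on n U f \<Longrightarrow> Rcontinuous_on n U (\<lambda>x. ereal (f x))"
  unfolding Rcontinuous_on_tendsto by (auto intro: tendsto_ereal)

lemma Rcontinuous_on_Rdist: "Rcontinuous_on n U (\<lambda>t. Rdist n t a)"
proof (rule Rcontinuous_onI)
  fix x assume "x \<in> U"
  have "((\<lambda>t. sqrt (\<Sum>i<n. (t i - a i)\<^sup>2)) \<longlongrightarrow> sqrt (\<Sum>i<n. (x i - a i)\<^sup>2)) (Rnhds n U x)"
    by (intro tendsto_intros) (simp add: tendsto_coord_Rnhds)
  then show "((\<lambda>t. Rdist n t a) \<longlongrightarrow> Rdist n x a) (Rnhds n U x)" by (simp add: Rdist_def)
qed

lemma Ropen_Rn: "Ropen n (Rn n)"
  unfolding Ropen_def using Rball_sub_Rn by (auto intro: exI[of _ 1])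

lemma Rball_sub_ball:
  assumes "t \<in> Rball n t0 \<delta>" "0 < \<delta>"
  shows "Rball n t0 (Rdist n t0 t) \<subseteq> Rball n t0 \<delta>"
  using assms by (auto simp: Rball_def)

lemma F_sub_dr:
  fixes T :: "'a::euclidean_space set set"
  shows "translation_params T \<subseteq> dr_diffeology T"
proof
  fix P assume "P \<in> translation_params T"
  then obtain T1 where T1: "T1 \<in> tiling_space T"
    and P: "P = (DIM('a), Rn DIM('a), restrict (\<lambda>x. tt T1 (vec_of x)) (Rn DIM('a)))"
    unfolding translation_params_def by blast
  define d where "d = DIM('a)"
  define p where "p = restrict (\<lambda>x. tt T1 (vec_of x :: 'a)) (Rn d)"
  have T1t: "is_tiling T1" using T1 by (simp add: tiling_space_def)
  obtain \<eta> where g: "gap T1 \<eta>" using gap_exists[OF T1t] by blast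
  have \<eta>: "0 < \<eta>" using gap_pos[OF g] .
  have par: "is_param (tiling_space T) (d, Rn d, p)"
    unfolding is_param_iff p_def using Ropen_Rn tiling_space_tt[OF T1] by auto
  have dreq: "dr r (p t1) (p t) = ereal (Rdist d t1 t)"
    if "r > 0" "t1 \<in> Rball d t0 (\<eta>/4)" "t \<in> Rball d t0 (\<eta>/4)" for r t0 t1 t
  proof -
    have "Rdist d t1 t \<le> Rdist d t1 t0 + Rdist d t0 t" by (rule Rdist_triangle)
    also have "\<dots> < \<eta>/2" using that by (simp add: Rball_def Rdist_sym)
    finally have small: "norm (vec_of t - vec_of t1 :: 'a) < \<eta>/2"
      using norm_vec_of_diff[where 'a='a, of t t1] by (simp add: d_def Rdist_sym)
    have "p t1 = tt T1 (vec_of t1)" "p t = tt T1 (vec_of t)"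
      using that(2,3) by (auto simp: p_def Rball_def)
    then show ?thesis using dr_tt[OF g _ small, of r] that(1) norm_vec_of_diff[where 'a='a, of t t1]
      by (simp add: d_def Rdist_sym)
  qed
  have "\<forall>t0\<in>Rn d. \<exists>\<delta>>0. Rball n t0 \<delta> \<subseteq> Rn d \<and> condA d p t0 \<delta> \<and> condB d (Rn d) p t0 \<delta>" if "n = d" for n
  proof
    fix t0 assume t0: "t0 \<in> Rn d"
    let ?B = "Rball d t0 (\<eta>/4)"
    have t0B: "t0 \<in> ?B" using t0 \<eta> by (simp add: Rball_def)
    have A: "condA d p t0 (\<eta>/4)" unfolding condA_def
    proof (intro allI impI)
      fix r :: real assume r: "r > 0"
      have "Rcontinuous_on d ?B (\<lambda>t. ereal (Rdist d t0 t))"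
        using Rcontinuous_on_ereal[OF Rcontinuous_on_Rdist[of d ?B t0]] by (simp add: Rdist_sym)
      then show "Rcontinuous_on d ?B (\<lambda>t. dr r (p t0) (p t))"
        by (rule Rcontinuous_on_cong) (simp add: dreq[OF r t0B])
    qed
    have B: "condB d (Rn d) p t0 (\<eta>/4)" unfolding condB_def
    proof (intro ballI allI impI)
      fix t1 r assume t1: "t1 \<in> ?B - {t \<in> Rn d. p t = p t0}" and r: "(r::real) > 0"
      have t1B: "t1 \<in> ?B" and t1R: "t1 \<in> Rn d" using t1 by (auto simp: Rball_def)
      have "t1 \<noteq> t0" using t1 t0 by auto
      then have \<rho>: "0 < Rdist d t0 t1" using Rdist_pos[OF t0 t1R] by simp
      let ?V = "Rball d t0 (Rdist d t0 t1)"
      have VB: "?V \<subseteq> ?B" using Rball_sub_ball[OF t1B] \<eta> by simp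
      have pos: "0 < Rdist d t1 t" if "t \<in> ?V" for t
      proof -
        have "t \<noteq> t1" using that by (auto simp: Rball_def)
        then show ?thesis using Rdist_pos[OF t1R] that by (auto simp: Rball_def)
      qed
      have "Rsmooth d ?V (\<lambda>t. Rdist d t1 t)" by (rule Rsmooth_Rdist[OF Ropen_Rball pos])
      then have "Rsmooth d ?V (\<lambda>t. real_of_ereal (dr r (p t1) (p t)))"
        by (rule Rsmooth_cong[OF Ropen_Rball]) (use VB dreq[OF r t1B] in auto)
      moreover have "\<forall>t\<in>?V. \<bar>dr r (p t1) (p t)\<bar> \<noteq> \<infinity>" using VB dreq[OF r t1B] by auto
      moreover have "t0 \<in> ?V" using t0 \<rho> by (simp add: Rball_def)
      ultimately show "Rsmooth_at d t0 ?B (\<lambda>t. dr r (p t1) (p t))"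
        unfolding Rsmooth_at_def using VB Ropen_Rball by blast
    qed
    show "\<exists>\<delta>>0. Rball n t0 \<delta> \<subseteq> Rn d \<and> condA d p t0 \<delta> \<and> condB d (Rn d) p t0 \<delta>"
      using A B \<eta> Rball_sub_Rn that by (intro exI[of _ "\<eta>/4"]) auto
  qed
  then have "(d, Rn d, p) \<in> dr_diffeology T"
    unfolding dr_diffeology_iff using par by blast
  then show "P \<in> dr_diffeology T" by (simp add: P p_def d_def)
qed

lemma condBD: "condB n U p t0 \<delta> \<Longrightarrow> t1 \<in> Rball n t0 \<delta> - {t\<in>U. p t = p t0} \<Longrightarrow> r > 0 \<Longrightarrow>
   Rsmooth_at n t0 (Rball n t0 \<delta>) (\<lambda>t. dr r (p t1) (p t))"
  unfolding condB_def by blast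

lemma condAD: "condA n p t0 \<delta> \<Longrightarrow> r > 0 \<Longrightarrow> Rcontinuous_on n (Rball n t0 \<delta>) (\<lambda>t. dr r (p t0) (p t))"
  unfolding condA_def by blast

lemma Rmap_cont_at:
  assumes cont: "\<And>j. j < n \<Longrightarrow> Rcontinuous_on m A (\<lambda>s. g s j)"
    and gA: "g ` A \<subseteq> Rn n" and s: "s \<in> A" and e: "0 < e"
  shows "\<exists>e'>0. \<forall>s'\<in>A. Rdist m s s' < e' \<longrightarrow> Rdist n (g s) (g s') < e"
proof -
  have "eventually (\<lambda>t. Rdist n (g s) t < e) (Rnhds n (Rn n) (g s))"
    unfolding eventually_Rnhds using e by auto
  then have "eventually (\<lambda>s'. Rdist n (g s) (g s') < e) (Rnhds m A s)"
    using filterlim_Rmap[OF cont gA s] unfolding filterlim_def le_filter_def eventually_filtermap by blast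
  then show ?thesis unfolding eventually_Rnhds by blast
qed

lemma Ropen_preimage:
  assumes A: "Ropen m A" and cont: "\<And>j. j < n \<Longrightarrow> Rcontinuous_on m A (\<lambda>s. g s j)"
    and gA: "g ` A \<subseteq> Rn n" and W: "Ropen n W"
  shows "Ropen m {s\<in>A. g s \<in> W}"
  unfolding Ropen_def
proof (intro conjI ballI)
  show "{s\<in>A. g s \<in> W} \<subseteq> Rn m" using A Ropen_sub by blast
  fix s assume s: "s \<in> {s\<in>A. g s \<in> W}"
  obtain e1 where e1: "e1 > 0" "Rball m s e1 \<subseteq> A" using Ropen_ball_in[OF A] s by blast
  obtain e where e: "e > 0" "Rball n (g s) e \<subseteq> W" using Ropen_ball_in[OF W] s by blast
  obtain e2 where e2: "e2 > 0" "\<forall>s'\<in>A. Rdist m s s' < e2 \<longrightarrow> Rdist n (g s) (g s') < e"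
    using Rmap_cont_at[OF cont gA _ e(1)] s by blast
  have "Rball m s (min e1 e2) \<subseteq> {s\<in>A. g s \<in> W}"
  proof
    fix s' assume s': "s' \<in> Rball m s (min e1 e2)"
    then have "s' \<in> A" using e1 by (auto simp: Rball_def)
    moreover have "Rdist n (g s) (g s') < e" using e2 s' \<open>s' \<in> A\<close> by (auto simp: Rball_def)
    moreover have "g s' \<in> Rn n" using gA \<open>s' \<in> A\<close> by auto
    ultimately show "s' \<in> {s\<in>A. g s \<in> W}" using e(2) by (auto simp: Rball_def)
  qed
  then show "\<exists>e>0. Rball m s e \<subseteq> {s\<in>A. g s \<in> W}" using e1 e2 by (intro exI[of _ "min e1 e2"]) auto
qed

lemma dr_diffeology_diffeology:
  fixes T :: "'a::euclidean_space set set"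
  shows "diffeology (tiling_space T) (dr_diffeology T)"
  unfolding diffeology_def
proof (intro conjI allI impI ballI)
  show "is_param (tiling_space T) P" if "P \<in> dr_diffeology T" for P
    using that unfolding dr_diffeology_def by auto
next
  fix n U c assume nU: "Ropen n U \<and> c \<in> tiling_space T"
  let ?p = "restrict (\<lambda>_. c) U"
  have par: "is_param (tiling_space T) (n, U, ?p)" using nU by (auto simp: is_param_iff)
  have "\<exists>\<delta>>0. Rball n t0 \<delta> \<subseteq> U \<and> condA n ?p t0 \<delta> \<and> condB n U ?p t0 \<delta>" if t0: "t0 \<in> U" for t0
  proof -
    obtain \<delta> where \<delta>: "\<delta> > 0" "Rball n t0 \<delta> \<subseteq> U" using Ropen_ball_in nU t0 by blast
    have "condA n ?p t0 \<delta>" unfolding condA_def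
    proof (intro allI impI)
      fix r :: real
      show "Rcontinuous_on n (Rball n t0 \<delta>) (\<lambda>t. dr r (?p t0) (?p t))"
        by (rule Rcontinuous_on_cong[OF Rcontinuous_on_const[of n _ "dr r c c"]]) (use \<delta> t0 in auto)
    qed
    moreover have "condB n U ?p t0 \<delta>" unfolding condB_def using \<delta> t0 by auto
    ultimately show ?thesis using \<delta> by blast
  qed
  then show "(n, U, ?p) \<in> dr_diffeology T" unfolding dr_diffeology_iff using par by blast
next
  fix n U p
  assume asm: "is_param (tiling_space T) (n, U, p) \<and>
    (\<exists>\<V>. (\<forall>V\<in>\<V>. Ropen n V) \<and> \<Union>\<V> = U \<and> (\<forall>V\<in>\<V>. (n, V, restrict p V) \<in> dr_diffeology T))"
  then obtain \<V> where par: "is_param (tiling_space T) (n, U, p)" and V: "\<forall>V\<in>\<V>. Ropen n V" "\<Union>\<V> = U"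
    "\<forall>V\<in>\<V>. (n, V, restrict p V) \<in> dr_diffeology T" by blast
  have "\<exists>\<delta>>0. Rball n t0 \<delta> \<subseteq> U \<and> condA n p t0 \<delta> \<and> condB n U p t0 \<delta>" if t0: "t0 \<in> U" for t0
  proof -
    obtain W where W: "W \<in> \<V>" "t0 \<in> W" using V(2) t0 by blast
    then have WU: "W \<subseteq> U" using V(2) by blast
    obtain \<delta> where \<delta>: "\<delta> > 0" "Rball n t0 \<delta> \<subseteq> W" "condA n (restrict p W) t0 \<delta>" "condB n W (restrict p W) t0 \<delta>"
      using V(3) W unfolding dr_diffeology_iff by blast
    have eq: "restrict p W t = p t" if "t \<in> Rball n t0 \<delta>" for t using that \<delta>(2) by auto
    have eq0: "restrict p W t0 = p t0" using W(2) by simp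
    have "condA n p t0 \<delta>" unfolding condA_def
    proof (intro allI impI)
      fix r :: real assume "r > 0"
      then have "Rcontinuous_on n (Rball n t0 \<delta>) (\<lambda>t. dr r (restrict p W t0) (restrict p W t))"
        by (rule condAD[OF \<delta>(3)])
      then show "Rcontinuous_on n (Rball n t0 \<delta>) (\<lambda>t. dr r (p t0) (p t))"
        by (rule Rcontinuous_on_cong) (simp only: eq eq0)
    qed
    moreover have "condB n U p t0 \<delta>" unfolding condB_def
    proof (intro ballI allI impI)
      fix t1 r assume t1: "t1 \<in> Rball n t0 \<delta> - {t\<in>U. p t = p t0}" and r: "(r::real) > 0"
      have t1B: "t1 \<in> Rball n t0 \<delta>" and ne: "p t1 \<noteq> p t0" using t1 \<delta>(2) WU by blast+
      then have "t1 \<in> Rball n t0 \<delta> - {t\<in>W. restrict p W t = restrict p W t0}"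
        using eq[OF t1B] eq0 by simp
      then have sm: "Rsmooth_at n t0 (Rball n t0 \<delta>) (\<lambda>t. dr r (restrict p W t1) (restrict p W t))"
        by (rule condBD[OF \<delta>(4) _ r])
      show "Rsmooth_at n t0 (Rball n t0 \<delta>) (\<lambda>t. dr r (p t1) (p t))"
        by (rule Rsmooth_at_cong[OF sm]) (simp only: eq[OF t1B] eq)
    qed
    ultimately show ?thesis using \<delta> WU by blast
  qed
  then show "(n, U, p) \<in> dr_diffeology T" unfolding dr_diffeology_iff using par by blast
next
  fix n U p m V g
  assume asm: "(n, U, p) \<in> dr_diffeology T \<and> Ropen m V \<and> Rsmooth_map m n V g \<and> g ` V \<subseteq> U"
  then have P: "(n, U, p) \<in> dr_diffeology T" and V: "Ropen m V" and gsm: "Rsmooth_map m n V g"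
    and gVU: "g ` V \<subseteq> U" by auto
  have gRn: "g ` V \<subseteq> Rn n" and gj: "\<And>j. j < n \<Longrightarrow> Rsmooth m V (\<lambda>s. g s j)"
    using gsm unfolding Rsmooth_map_def by auto
  have gjc: "\<And>j. j < n \<Longrightarrow> Rcontinuous_on m V (\<lambda>s. g s j)" using gj Rsmooth_cont by blast
  have parP: "is_param (tiling_space T) (n, U, p)" using P unfolding dr_diffeology_iff by blast
  then have pX: "p \<in> U \<rightarrow>\<^sub>E tiling_space T" by (simp add: is_param_iff)
  let ?q = "restrict (p \<circ> g) V"
  have par: "is_param (tiling_space T) (m, V, ?q)"
    unfolding is_param_iff using V pX gVU by (auto simp: PiE_iff image_subset_iff)
  have "\<exists>\<delta>>0. Rball m s0 \<delta> \<subseteq> V \<and> condA m ?q s0 \<delta> \<and> condB m V ?q s0 \<delta>" if s0: "s0 \<in> V" for s0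
  proof -
    define t0 where "t0 = g s0"
    have t0U: "t0 \<in> U" using gVU s0 t0_def by auto
    obtain \<delta> where \<delta>: "\<delta> > 0" "Rball n t0 \<delta> \<subseteq> U" "condA n p t0 \<delta>" "condB n U p t0 \<delta>"
      using P t0U unfolding dr_diffeology_iff by blast
    obtain e1 where e1: "e1 > 0" "Rball m s0 e1 \<subseteq> V" using Ropen_ball_in[OF V s0] by blast
    obtain e2 where e2: "e2 > 0" "\<forall>s'\<in>V. Rdist m s0 s' < e2 \<longrightarrow> Rdist n t0 (g s') < \<delta>"
      using Rmap_cont_at[OF gjc gRn s0 \<delta>(1)] unfolding t0_def by blast
    define \<delta>' where "\<delta>' = min e1 e2"
    let ?B' = "Rball m s0 \<delta>'" and ?B = "Rball n t0 \<delta>"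
    have \<delta>': "\<delta>' > 0" using e1 e2 by (simp add: \<delta>'_def)
    have B'V: "?B' \<subseteq> V" using e1(2) Rball_mono[of \<delta>' e1 m s0] by (auto simp: \<delta>'_def)
    have gB': "g ` ?B' \<subseteq> ?B"
    proof
      fix t assume "t \<in> g ` ?B'"
      then obtain s where s: "s \<in> ?B'" "t = g s" by blast
      then have "s \<in> V" using B'V by blast
      then have "Rdist n t0 (g s) < \<delta>" "g s \<in> Rn n" using e2 s gRn by (auto simp: Rball_def \<delta>'_def)
      then show "t \<in> ?B" using s by (simp add: Rball_def)
    qed
    have qeq: "?q s = p (g s)" if "s \<in> ?B'" for s using that B'V by auto
    have q0: "?q s0 = p t0" using s0 by (simp add: t0_def)
    have gjcB: "\<And>j. j < n \<Longrightarrow> Rcontinuous_on m ?B' (\<lambda>s. g s j)" using gjc B'V Rcontinuous_on_subset by blast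
    have "condA m ?q s0 \<delta>'" unfolding condA_def
    proof (intro allI impI)
      fix r :: real assume r: "r > 0"
      have "Rcontinuous_on n ?B (\<lambda>t. dr r (p t0) (p t))" by (rule condAD[OF \<delta>(3) r])
      then have "Rcontinuous_on m ?B' (\<lambda>s. dr r (p t0) (p (g s)))"
        by (rule Rcontinuous_on_compose[OF _ gjcB gB'])
      then show "Rcontinuous_on m ?B' (\<lambda>s. dr r (?q s0) (?q s))"
        by (rule Rcontinuous_on_cong) (simp only: qeq q0)
    qed
    moreover have "condB m V ?q s0 \<delta>'" unfolding condB_def
    proof (intro ballI allI impI)
      fix s1 r assume s1: "s1 \<in> ?B' - {s\<in>V. ?q s = ?q s0}" and r: "(r::real) > 0"
      have s1B': "s1 \<in> ?B'" using s1 by blast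
      have "g s1 \<in> ?B" using gB' s1B' by blast
      moreover have "g s1 \<in> U" using gVU B'V s1B' by blast
      moreover have "p (g s1) \<noteq> p t0" using s1 qeq[OF s1B'] q0 B'V by auto
      ultimately have "g s1 \<in> ?B - {t\<in>U. p t = p t0}" by blast
      then have "Rsmooth_at n t0 ?B (\<lambda>t. dr r (p (g s1)) (p t))" by (rule condBD[OF \<delta>(4) _ r])
      then obtain W where W: "Ropen n W" "t0 \<in> W" "W \<subseteq> ?B" "\<forall>t\<in>W. \<bar>dr r (p (g s1)) (p t)\<bar> \<noteq> \<infinity>"
        "Rsmooth n W (\<lambda>t. real_of_ereal (dr r (p (g s1)) (p t)))" unfolding Rsmooth_at_def by blast
      define W' where "W' = {s\<in>?B'. g s \<in> W}"
      have gRnB': "g ` ?B' \<subseteq> Rn n" using gRn B'V by blast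
      have W'o: "Ropen m W'" unfolding W'_def by (rule Ropen_preimage[OF Ropen_Rball gjcB gRnB' W(1)])
      have s0W': "s0 \<in> W'" unfolding W'_def using W(2) \<delta>' s0 V Ropen_sub by (auto simp: t0_def Rball_def)
      have W'B': "W' \<subseteq> ?B'" unfolding W'_def by blast
      have gW': "g ` W' \<subseteq> W" unfolding W'_def by blast
      have gjW': "\<And>j. j < n \<Longrightarrow> Rsmooth m W' (\<lambda>s. g s j)" using gj W'B' B'V Rsmooth_subset by blast
      have "Rsmooth m W' (\<lambda>s. real_of_ereal (dr r (p (g s1)) (p (g s))))"
        by (rule Rsmooth_comp[OF W(1) W'o gW' gjW' W(5)])
      have eqW: "?q s = p (g s)" if "s \<in> W'" for s using qeq W'B' that by blast
      have sm: "Rsmooth m W' (\<lambda>s. real_of_ereal (dr r (?q s1) (?q s)))"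
        by (rule Rsmooth_cong[OF W'o \<open>Rsmooth m W' (\<lambda>s. real_of_ereal (dr r (p (g s1)) (p (g s))))\<close>])
          (simp only: eqW qeq[OF s1B'])
      have fin: "\<forall>s\<in>W'. \<bar>dr r (?q s1) (?q s)\<bar> \<noteq> \<infinity>"
      proof
        fix s assume s: "s \<in> W'"
        then have "g s \<in> W" using gW' by blast
        then have "\<bar>dr r (p (g s1)) (p (g s))\<bar> \<noteq> \<infinity>" by (rule bspec[OF W(4)])
        moreover have e: "dr r (?q s1) (?q s) = dr r (p (g s1)) (p (g s))" by (simp only: qeq[OF s1B'] eqW[OF s])
        ultimately show "\<bar>dr r (?q s1) (?q s)\<bar> \<noteq> \<infinity>" by (simp only: e) simp
      qed
      show "Rsmooth_at m s0 ?B' (\<lambda>s. dr r (?q s1) (?q s))"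
        unfolding Rsmooth_at_def using W'o s0W' W'B' fin sm by blast
    qed
    ultimately show ?thesis using \<delta>' B'V by blast
  qed
  then show "(m, V, ?q) \<in> dr_diffeology T" unfolding dr_diffeology_iff using par by blast
qed

lemma generated_sub_dr:
  fixes T :: "'a::euclidean_space set set"
  shows "generated_diffeology (tiling_space T) (translation_params T) \<subseteq> dr_diffeology T"
  unfolding generated_diffeology_def using dr_diffeology_diffeology F_sub_dr by blast

definition seg :: "(nat \<Rightarrow> real) \<Rightarrow> (nat \<Rightarrow> real) \<Rightarrow> real \<Rightarrow> nat \<Rightarrow> real" where
  "seg t0 t l = (\<lambda>j. t0 j + l * (t j - t0 j))"

lemma seg_0[simp]: "seg t0 t 0 = t0" by (simp add: seg_def)
lemma seg_1[simp]: "seg t0 t 1 = t" by (simp add: seg_def)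

lemma Rdist_seg: "Rdist n (seg t0 t a) (seg t0 t b) = \<bar>a - b\<bar> * Rdist n t0 t"
proof -
  have "(\<Sum>j<n. (seg t0 t a j - seg t0 t b j)\<^sup>2) = (a - b)\<^sup>2 * (\<Sum>j<n. (t0 j - t j)\<^sup>2)"
    unfolding sum_distrib_left by (intro sum.cong) (auto simp: seg_def power2_eq_square algebra_simps)
  then show ?thesis by (simp add: Rdist_def real_sqrt_mult)
qed

lemma seg_Rn: "t0 \<in> Rn n \<Longrightarrow> t \<in> Rn n \<Longrightarrow> seg t0 t l \<in> Rn n"
  by (simp add: seg_def Rn_def)

lemma seg_in_ball:
  assumes "t0 \<in> Rn n" "t \<in> Rball n t0 \<delta>" "l \<in> {0..1}"
  shows "seg t0 t l \<in> Rball n t0 \<delta>"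
proof -
  have "Rdist n t0 (seg t0 t l) = \<bar>0 - l\<bar> * Rdist n t0 t" using Rdist_seg[of n t0 t 0 l] by simp
  also have "\<dots> \<le> Rdist n t0 t" using assms(3) by (simp add: mult_left_le_one_le)
  finally show ?thesis using assms seg_Rn by (auto simp: Rball_def)
qed

lemma cont_seg:
  assumes f: "Rcontinuous_on n S f" and inS: "\<And>l. l \<in> {0..1} \<Longrightarrow> seg t0 t l \<in> S"
  shows "continuous_on {0..1} (\<lambda>l. f (seg t0 t l))"
  unfolding continuous_on_def
proof
  fix x :: real assume x: "x \<in> {0..1}"
  have "filterlim (seg t0 t) (Rnhds n S (seg t0 t x)) (at x within {0..1})"
    unfolding filterlim_def le_filter_def eventually_filtermap
  proof (intro allI impI)
    fix P assume "eventually P (Rnhds n S (seg t0 t x))"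
    then obtain e where e: "e > 0" "\<forall>y\<in>S. Rdist n (seg t0 t x) y < e \<longrightarrow> P y" unfolding eventually_Rnhds by blast
    define R where "R = Rdist n t0 t"
    have R: "0 \<le> R" by (simp add: R_def)
    show "eventually (\<lambda>y. P (seg t0 t y)) (at x within {0..1})"
      unfolding eventually_at
    proof (intro exI[of _ "e / (R + 1)"] conjI ballI impI)
      show "0 < e / (R + 1)" using e R by simp
      fix y assume y: "y \<in> {0..1}" "y \<noteq> x \<and> dist y x < e / (R + 1)"
      have "Rdist n (seg t0 t x) (seg t0 t y) = \<bar>x - y\<bar> * R" by (simp add: Rdist_seg R_def)
      also have "\<dots> \<le> \<bar>x - y\<bar> * (R + 1)" by (simp add: mult_left_mono)
      also have "\<dots> < e" using y R by (simp add: dist_real_def abs_minus_commute field_simps)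
      finally show "P (seg t0 t y)" using e inS[OF y(1)] by blast
    qed
  qed
  moreover have "(f \<longlongrightarrow> f (seg t0 t x)) (Rnhds n S (seg t0 t x))"
    using Rcontinuous_onD[OF f inS[OF x]] .
  ultimately show "((\<lambda>l. f (seg t0 t l)) \<longlongrightarrow> f (seg t0 t x)) (at x within {0..1})"
    by (rule filterlim_compose[rotated])
qed

lemma connected_dichotomy:
  fixes f :: "real \<Rightarrow> ereal"
  assumes cont: "continuous_on {0..1} f" and dich: "\<And>l. l \<in> {0..1} \<Longrightarrow> f l < ereal a \<or> ereal b < f l"
    and ab: "a \<le> b" and f0: "f 0 < ereal a"
  shows "f 1 < ereal a"
proof -
  have conn: "connected (f ` {0..1})" by (rule connected_continuous_image[OF cont connected_Icc])
  have "{..< ereal a} \<inter> {ereal b <..} = {}"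
  proof (rule ccontr)
    assume "{..< ereal a} \<inter> {ereal b <..} \<noteq> {}"
    then obtain z where "z < ereal a" "ereal b < z" by auto
    then have "ereal b < ereal a" by (rule less_trans[rotated])
    then show False using ab by simp
  qed
  then have "{..< ereal a} \<inter> {ereal b <..} \<inter> f ` {0..1} = {}" by blast
  moreover have "f ` {0..1} \<subseteq> {..< ereal a} \<union> {ereal b <..}"
  proof
    fix z assume "z \<in> f ` {0..1}"
    then obtain l where l: "l \<in> {0..1}" "z = f l" by blast
    then show "z \<in> {..< ereal a} \<union> {ereal b <..}" using dich[OF l(1)] by simp
  qed
  ultimately have "{..< ereal a} \<inter> f ` {0..1} = {} \<or> {ereal b <..} \<inter> f ` {0..1} = {}"
    using connectedD[OF conn open_lessThan open_greaterThan] by blast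
  moreover have "f 0 \<in> {..< ereal a} \<inter> f ` {0..1}" using f0 by auto
  ultimately have "{ereal b <..} \<inter> f ` {0..1} = {}" by blast
  then have "\<not> ereal b < f 1" by auto
  then show ?thesis using dich[of 1] by auto
qed

lemma Rcont_at_lt:
  assumes "Rcontinuous_on n S f" "x \<in> S" "f x < (c::ereal)"
  shows "\<exists>e>0. \<forall>y\<in>S. Rdist n x y < e \<longrightarrow> f y < c"
proof -
  have o: "open {..< c}" and m: "f x \<in> {..< c}" using assms(3) by auto
  have "\<forall>S'. open S' \<and> f x \<in> S' \<longrightarrow> (\<exists>e>0. \<forall>y\<in>S. Rdist n x y < e \<longrightarrow> f y \<in> S')"
    using assms(1,2) unfolding Rcontinuous_on_def by blast
  then have "\<exists>e>0. \<forall>y\<in>S. Rdist n x y < e \<longrightarrow> f y \<in> {..< c}" using o m by blast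
  then show ?thesis by simp
qed

lemma local_translate:
  fixes T :: "'a::euclidean_space set set"
  assumes P: "(n, U, p) \<in> dr_diffeology T" and t0: "t0 \<in> U"
  shows "\<exists>\<eta> \<delta> \<delta>1 u. gap (p t0) \<eta> \<and> 0 < \<delta>1 \<and> \<delta>1 \<le> \<delta> \<and> Rball n t0 \<delta> \<subseteq> U \<and> condB n U p t0 \<delta> \<and>
     (\<forall>t\<in>Rball n t0 \<delta>1. p t = tt (p t0) (u t) \<and> norm (u t) < \<eta>/4) \<and>
     (\<forall>\<epsilon>>0. \<exists>e>0. \<forall>t\<in>Rball n t0 \<delta>1. Rdist n t0 t < e \<longrightarrow> norm (u t) < \<epsilon>)"
proof -
  define p0 where "p0 = p t0"
  have par: "is_param (tiling_space T) (n, U, p)" using P unfolding dr_diffeology_iff by blast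
  then have pX: "\<And>t. t \<in> U \<Longrightarrow> p t \<in> tiling_space T" and Uo: "Ropen n U" by (auto simp: is_param_iff)
  have ptil: "\<And>t. t \<in> U \<Longrightarrow> is_tiling (p t)" using pX by (simp add: tiling_space_def)
  have p0t: "is_tiling p0" using ptil t0 p0_def by simp
  obtain \<eta> where g: "gap p0 \<eta>" using gap_exists[OF p0t] by blast
  have \<eta>: "0 < \<eta>" using gap_pos[OF g] .
  obtain \<delta> where \<delta>: "\<delta> > 0" "Rball n t0 \<delta> \<subseteq> U" "condA n p t0 \<delta>" "condB n U p t0 \<delta>"
    using P t0 unfolding dr_diffeology_iff by blast
  let ?B = "Rball n t0 \<delta>"
  have t0R: "t0 \<in> Rn n" using t0 Uo Ropen_sub by blast
  have t0B: "t0 \<in> ?B" using t0R \<delta>(1) by (simp add: Rball_def)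
  have cont: "\<And>r. r > 0 \<Longrightarrow> Rcontinuous_on n ?B (\<lambda>t. dr r p0 (p t))"
    using condAD[OF \<delta>(3)] p0_def by simp
  have dr00: "dr r p0 p0 = 0" if "0 \<le> r" for r using dr_self[OF p0t that] .
  obtain e where e: "e > 0" "\<forall>t\<in>?B. Rdist n t0 t < e \<longrightarrow> dr 1 p0 (p t) < ereal (\<eta>/4)"
    using Rcont_at_lt[OF cont[of 1] t0B, of "ereal (\<eta>/4)"] dr00[of 1] \<eta> p0_def by (auto simp: zero_ereal_def)
  define \<delta>1 where "\<delta>1 = min \<delta> e"
  let ?B1 = "Rball n t0 \<delta>1"
  have \<delta>1: "0 < \<delta>1" "\<delta>1 \<le> \<delta>" using \<delta>(1) e(1) by (auto simp: \<delta>1_def)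
  have B1B: "?B1 \<subseteq> ?B" using Rball_mono[OF \<delta>1(2)] .
  have B1U: "?B1 \<subseteq> U" using B1B \<delta>(2) by blast
  have dr1: "dr 1 p0 (p t) < ereal (\<eta>/4)" if "t \<in> ?B1" for t
    using e(2) that B1B by (auto simp: \<delta>1_def Rball_def)
  define u where "u t = (SOME u. norm u < \<eta>/4 \<and> patch (tt p0 u) (cball 0 1) = patch (p t) (cball 0 1))" for t
  have u: "norm (u t) < \<eta>/4 \<and> patch (tt p0 (u t)) (cball 0 1) = patch (p t) (cball 0 1)" if "t \<in> ?B1" for t
    unfolding u_def by (rule someI_ex) (rule dr_lessD[OF dr1[OF that]])
  have dich: "dr r p0 (p t) < ereal (\<eta>/4) \<or> ereal (\<eta>/2) < dr r p0 (p t)" if t: "t \<in> ?B1" and r: "1 \<le> r" for t r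
  proof (cases "dr r p0 (p t) < ereal (3*\<eta>/4)")
    case True
    then obtain u' where u': "norm u' < 3*\<eta>/4" "patch (tt p0 u') (cball 0 r) = patch (p t) (cball 0 r)"
      using dr_lessD by blast
    have "patch (tt p0 u') (cball 0 1) = patch (p t) (cball 0 1)"
      by (rule patch_eq_sub[OF u'(2)]) (use r in auto)
    then have eq1: "patch (tt p0 u') (cball 0 1) = patch (tt p0 (u t)) (cball 0 1)" using u[OF t] by simp
    have "u' = u t"
    proof (rule ccontr)
      assume "u' \<noteq> u t"
      then have "\<eta> \<le> norm (u' - u t)" using gapD[OF g _ eq1] by simp
      also have "\<dots> \<le> norm u' + norm (u t)" by (rule norm_triangle_ineq4)
      also have "\<dots> < \<eta>" using u'(1) u[OF t] by simp
      finally show False by simp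
    qed
    then have eqr: "patch (tt p0 (u t)) (cball 0 r) = patch (p t) (cball 0 r)" using u'(2) by simp
    have "dr r p0 (p t) \<le> ereal ((norm (u t) + \<eta>/4)/2)"
      by (rule dr_leI[OF _ eqr]) (use u[OF t] in simp)
    also have "\<dots> < ereal (\<eta>/4)" using u[OF t] by simp
    finally show ?thesis by simp
  next
    case False
    then have "ereal (3*\<eta>/4) \<le> dr r p0 (p t)" by simp
    moreover have "ereal (\<eta>/2) < ereal (3*\<eta>/4)" using \<eta> by simp
    ultimately show ?thesis by (meson less_le_trans)
  qed
  have small: "dr r p0 (p t) < ereal (\<eta>/4)" if t: "t \<in> ?B1" and r: "1 \<le> r" for t r
  proof -
    have segB1: "seg t0 t l \<in> ?B1" if "l \<in> {0..1}" for l using seg_in_ball[OF t0R t that] .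
    have "Rcontinuous_on n ?B1 (\<lambda>t. dr r p0 (p t))"
      using Rcontinuous_on_subset[OF cont B1B] r by simp
    then have c: "continuous_on {0..1} (\<lambda>l. dr r p0 (p (seg t0 t l)))"
      by (rule cont_seg) (rule segB1)
    show ?thesis
      using connected_dichotomy[OF c, of "\<eta>/4" "\<eta>/2"] dich[OF segB1 r] \<eta> dr00 r
      by (auto simp: zero_ereal_def p0_def[symmetric])
  qed
  have eqr: "patch (tt p0 (u t)) (cball 0 r) = patch (p t) (cball 0 r)" if t: "t \<in> ?B1" and r: "1 \<le> r" for t r
  proof -
    obtain u' where u': "norm u' < \<eta>/4" "patch (tt p0 u') (cball 0 r) = patch (p t) (cball 0 r)"
      using dr_lessD[OF small[OF t r]] by blast
    have "patch (tt p0 u') (cball 0 1) = patch (p t) (cball 0 1)"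
      by (rule patch_eq_sub[OF u'(2)]) (use r in auto)
    then have eq1: "patch (tt p0 u') (cball 0 1) = patch (tt p0 (u t)) (cball 0 1)" using u[OF t] by simp
    have "u' = u t"
    proof (rule ccontr)
      assume "u' \<noteq> u t"
      then have "\<eta> \<le> norm (u' - u t)" using gapD[OF g _ eq1] by simp
      also have "\<dots> \<le> norm u' + norm (u t)" by (rule norm_triangle_ineq4)
      also have "\<dots> < \<eta>"
      proof -
        have "norm (u t) < \<eta>/4" using u[OF t] by blast
        then show ?thesis using u'(1) \<eta> by linarith
      qed
      finally show False by simp
    qed
    then show ?thesis using u'(2) by simp
  qed
  have ptr: "p t = tt p0 (u t)" if t: "t \<in> ?B1" for t
  proof -
    have "tt p0 (u t) = p t"
      by (rule tiling_eq[OF is_tiling_tt[OF p0t] ptil]) (use t B1U eqr in auto)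
    then show ?thesis by simp
  qed
  have dru: "dr 1 p0 (p t) = ereal (norm (u t))" if t: "t \<in> ?B1" for t
  proof -
    have "norm (u t) < \<eta>/4" using u[OF t] by blast
    then have sm: "norm (u t - 0) < \<eta>/2" using \<eta> by simp
    have "dr 1 (tt p0 0) (tt p0 (u t)) = ereal (norm (u t - 0))" by (rule dr_tt[OF g _ sm]) simp
    then show ?thesis using ptr[OF t] by simp
  qed
  have ucont: "\<exists>e>0. \<forall>t\<in>?B1. Rdist n t0 t < e \<longrightarrow> norm (u t) < \<epsilon>" if \<epsilon>: "\<epsilon> > 0" for \<epsilon>
  proof -
    obtain e' where e': "e' > 0" "\<forall>t\<in>?B. Rdist n t0 t < e' \<longrightarrow> dr 1 p0 (p t) < ereal \<epsilon>"
      using Rcont_at_lt[OF cont[of 1] t0B, of "ereal \<epsilon>"] dr00[of 1] \<epsilon> by (auto simp: zero_ereal_def p0_def[symmetric])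
    have "\<forall>t\<in>?B1. Rdist n t0 t < e' \<longrightarrow> norm (u t) < \<epsilon>"
    proof (intro ballI impI)
      fix t assume "t \<in> ?B1" "Rdist n t0 t < e'"
      then have "dr 1 p0 (p t) < ereal \<epsilon>" using e'(2) B1B by blast
      then show "norm (u t) < \<epsilon>" using dru[OF \<open>t \<in> ?B1\<close>] by simp
    qed
    then show ?thesis using e'(1) by blast
  qed
  show ?thesis
    using g \<delta>1 \<delta>(2,4) ptr u ucont unfolding p0_def by blast
qed

lemma norm_diff_sq: "(norm (x - a))\<^sup>2 = (norm x)\<^sup>2 - 2 * inner x a + (norm (a::'a::real_inner))\<^sup>2"
  by (simp add: power2_norm_eq_inner inner_diff_left inner_diff_right inner_commute)

lemma inner_from_sq:
  "inner x (a - b) = ((norm (x - b))\<^sup>2 - (norm (x - a))\<^sup>2 + (norm a)\<^sup>2 - (norm (b::'a::real_inner))\<^sup>2) / 2"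
  by (simp add: norm_diff_sq inner_diff_right)

lemma local_smooth_rep:
  fixes T :: "'a::euclidean_space set set"
  assumes P: "(n, U, p) \<in> dr_diffeology T" and t0: "t0 \<in> U"
  shows "\<exists>V g. Ropen n V \<and> t0 \<in> V \<and> V \<subseteq> U \<and> Rsmooth_map n DIM('a) V g \<and>
           (\<forall>t\<in>V. p t = tt (p t0) (vec_of (g t)))"
proof -
  obtain \<eta> \<delta> \<delta>1 u where g: "gap (p t0) \<eta>" and \<delta>1: "0 < \<delta>1" "\<delta>1 \<le> \<delta>" and BU: "Rball n t0 \<delta> \<subseteq> U"
    and cB: "condB n U p t0 \<delta>"
    and ptr: "\<forall>t\<in>Rball n t0 \<delta>1. p t = tt (p t0) (u t) \<and> norm (u t) < \<eta>/4"
    and ucont: "\<forall>\<epsilon>>0. \<exists>e>0. \<forall>t\<in>Rball n t0 \<delta>1. Rdist n t0 t < e \<longrightarrow> norm (u t) < \<epsilon>"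
    using local_translate[OF P t0] by blast
  define p0 where "p0 = p t0"
  let ?B = "Rball n t0 \<delta>" and ?B1 = "Rball n t0 \<delta>1"
  have \<eta>: "0 < \<eta>" using gap_pos[OF g] .
  have par: "is_param (tiling_space T) (n, U, p)" using P unfolding dr_diffeology_iff by blast
  then have Uo: "Ropen n U" by (simp add: is_param_iff)
  have t0R: "t0 \<in> Rn n" using t0 Uo Ropen_sub by blast
  have B1B: "?B1 \<subseteq> ?B" by (rule Rball_mono[OF \<delta>1(2)])
  have B1U: "?B1 \<subseteq> U" using B1B BU by blast
  have t0B1: "t0 \<in> ?B1" using t0R \<delta>1 by (simp add: Rball_def)
  have pt: "p t = tt p0 (u t)" if "t \<in> ?B1" for t using ptr that p0_def by blast
  have ub: "norm (u t) < \<eta>/4" if "t \<in> ?B1" for t using ptr that by blast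
  have pre: "p t = p0 \<longleftrightarrow> u t = 0" if t: "t \<in> ?B1" for t
  proof
    assume "p t = p0"
    then have tt0: "tt p0 (u t) = tt p0 0" using pt[OF t] by simp
    have e: "patch (tt p0 (u t)) (cball 0 0) = patch (tt p0 0) (cball 0 0)" by (simp only: tt0)
    show "u t = 0"
    proof (rule ccontr)
      assume "u t \<noteq> 0"
      then have "\<eta> \<le> norm (u t - 0)" using gapD[OF g[folded p0_def] order.refl e] by blast
      then show False using ub[OF t] \<eta> by simp
    qed
  qed (simp add: pt[OF t])
  show ?thesis
  proof (cases "\<exists>e>0. \<forall>t\<in>?B1. Rdist n t0 t < e \<longrightarrow> u t = 0")
    case True
    then obtain e where e: "e > 0" "\<forall>t\<in>?B1. Rdist n t0 t < e \<longrightarrow> u t = 0" by blast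
    define V where "V = Rball n t0 (min e \<delta>1)"
    have VB1: "V \<subseteq> ?B1" unfolding V_def by (rule Rball_mono) simp
    have "Rsmooth_map n DIM('a) V (\<lambda>t i. 0)"
      unfolding Rsmooth_map_def by (auto simp: Rn_def Rsmooth_const)
    moreover have "p t = tt (p t0) (vec_of ((\<lambda>t i. 0) t))" if "t \<in> V" for t
    proof -
      have "t \<in> ?B1" "Rdist n t0 t < e" using that VB1 by (auto simp: V_def Rball_def)
      then have "u t = 0" using e by blast
      then show ?thesis using pt[OF \<open>t \<in> ?B1\<close>] by (simp add: vec_of_def p0_def)
    qed
    moreover have "t0 \<in> V" using t0R e \<delta>1 by (simp add: V_def Rball_def)
    ultimately show ?thesis using Ropen_Rball[of n t0 "min e \<delta>1"] VB1 B1U unfolding V_def[symmetric] by blast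
  next
    case False
    then have near: "\<exists>t\<in>?B1. Rdist n t0 t < e \<and> u t \<noteq> 0" if "e > 0" for e using that by blast
    define S where "S = u ` {t\<in>?B1. u t \<noteq> 0}"
    define Q where "Q a t = (norm (u t - a))\<^sup>2" for a t
    have nb: "\<exists>\<rho>>0. Rball n t0 \<rho> \<subseteq> ?B1 \<and> Rsmooth n (Rball n t0 \<rho>) (Q a)" if a: "a \<in> S" for a
    proof -
      obtain t1 where t1: "t1 \<in> ?B1" "u t1 \<noteq> 0" "a = u t1" using a S_def by blast
      have "p t1 \<noteq> p0" using pre[OF t1(1)] t1(2) by simp
      then have "t1 \<in> ?B - {t\<in>U. p t = p t0}" using t1(1) B1B p0_def by blast
      then have "Rsmooth_at n t0 ?B (\<lambda>t. dr 1 (p t1) (p t))" by (rule condBD[OF cB]) simp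
      then obtain W where W: "Ropen n W" "t0 \<in> W" "W \<subseteq> ?B"
        "Rsmooth n W (\<lambda>t. real_of_ereal (dr 1 (p t1) (p t)))" unfolding Rsmooth_at_def by blast
      have "Ropen n (W \<inter> ?B1)" by (rule Ropen_Int[OF W(1) Ropen_Rball])
      then obtain \<rho> where \<rho>: "\<rho> > 0" "Rball n t0 \<rho> \<subseteq> W \<inter> ?B1" using Ropen_ball_in W(2) t0B1 by blast
      have eq: "real_of_ereal (dr 1 (p t1) (p t)) = norm (u t - a)" if t: "t \<in> Rball n t0 \<rho>" for t
      proof -
        have tB1: "t \<in> ?B1" using t \<rho>(2) by blast
        have "norm (u t - u t1) \<le> norm (u t) + norm (u t1)" by (rule norm_triangle_ineq4)
        also have "\<dots> < \<eta>/2" using ub[OF tB1] ub[OF t1(1)] by simp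
        finally have sm: "norm (u t - u t1) < \<eta>/2" .
        have "dr 1 (tt p0 (u t1)) (tt p0 (u t)) = ereal (norm (u t - u t1))"
          by (rule dr_tt[OF g[folded p0_def] _ sm]) simp
        then show ?thesis using pt[OF tB1] pt[OF t1(1)] t1(3) by simp
      qed
      have "Rsmooth n (Rball n t0 \<rho>) (\<lambda>t. real_of_ereal (dr 1 (p t1) (p t)))"
        using Rsmooth_subset[OF W(4)] \<rho>(2) by blast
      then have sm1: "Rsmooth n (Rball n t0 \<rho>) (\<lambda>t. norm (u t - a))"
        by (rule Rsmooth_cong[OF Ropen_Rball]) (rule eq)
      have "Rsmooth n (Rball n t0 \<rho>) (\<lambda>t. norm (u t - a) * norm (u t - a))"
        by (rule Rsmooth_mult[OF sm1 sm1])
      moreover have "Q a = (\<lambda>t. norm (u t - a) * norm (u t - a))" by (simp add: fun_eq_iff Q_def power2_eq_square)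
      ultimately have "Rsmooth n (Rball n t0 \<rho>) (Q a)" by simp
      then show ?thesis using \<rho> by blast
    qed
    then obtain \<rho>f where \<rho>f: "\<And>a. a \<in> S \<Longrightarrow> \<rho>f a > 0 \<and> Rball n t0 (\<rho>f a) \<subseteq> ?B1 \<and> Rsmooth n (Rball n t0 (\<rho>f a)) (Q a)"
      by metis
    define D where "D = {a - b | a b. a \<in> S \<and> b \<in> S}"
    obtain Bs where Bs: "Bs \<subseteq> D" "independent Bs" "D \<subseteq> span Bs" by (rule maximal_independent_subset)
    have finBs: "finite Bs" using independent_bound[OF Bs(2)] by blast
    have "\<forall>w\<in>Bs. \<exists>ab. fst ab \<in> S \<and> snd ab \<in> S \<and> w = fst ab - snd ab" using Bs(1) D_def by fastforce
    then obtain ab where ab: "\<forall>w\<in>Bs. fst (ab w) \<in> S \<and> snd (ab w) \<in> S \<and> w = fst (ab w) - snd (ab w)"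
      by (rule bchoice[elim_format]) blast
    define R where "R = insert \<delta>1 ((\<lambda>w. \<rho>f (fst (ab w))) ` Bs \<union> (\<lambda>w. \<rho>f (snd (ab w))) ` Bs)"
    define \<rho>0 where "\<rho>0 = Min R"
    have finR: "finite R" using finBs by (simp add: R_def)
    have \<rho>0pos: "\<rho>0 > 0" unfolding \<rho>0_def
      using finR \<delta>1(1) ab \<rho>f by (subst Min_gr_iff) (auto simp: R_def)
    have \<rho>0le: "\<rho>0 \<le> x" if "x \<in> R" for x unfolding \<rho>0_def using finR that by simp
    define V where "V = Rball n t0 \<rho>0"
    have VB1: "V \<subseteq> ?B1" unfolding V_def by (rule Rball_mono) (rule \<rho>0le, simp add: R_def)
    have Qsm: "Rsmooth n V (Q a)" if "a \<in> fst ` ab ` Bs \<union> snd ` ab ` Bs" for a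
    proof -
      have aS: "a \<in> S" using that ab by auto
      have "\<rho>0 \<le> \<rho>f a" using that by (intro \<rho>0le) (auto simp: R_def)
      then have "V \<subseteq> Rball n t0 (\<rho>f a)" unfolding V_def by (rule Rball_mono)
      then show ?thesis using Rsmooth_subset \<rho>f[OF aS] by blast
    qed
    define PS where "PS = {v. Rsmooth n V (\<lambda>t. inner (u t) v)}"
    have subPS: "subspace PS"
      unfolding subspace_def PS_def
      by (auto simp: inner_add_right Rsmooth_const intro: Rsmooth_add Rsmooth_cmult)
    have BsPS: "Bs \<subseteq> PS"
    proof
      fix w assume w: "w \<in> Bs"
      define a where "a = fst (ab w)"
      define b where "b = snd (ab w)"
      have wab: "w = a - b" using ab w by (simp add: a_def b_def)
      have qa: "Rsmooth n V (Q a)" using Qsm[of a] w unfolding a_def by blast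
      have qb: "Rsmooth n V (Q b)" using Qsm[of b] w unfolding b_def by blast
      have s1: "Rsmooth n V (\<lambda>t. Q b t - Q a t)" by (rule Rsmooth_diff[OF qb qa])
      have s2: "Rsmooth n V (\<lambda>t. (Q b t - Q a t) + ((norm a)\<^sup>2 - (norm b)\<^sup>2))"
        by (rule Rsmooth_add[OF s1 Rsmooth_const])
      have s3: "Rsmooth n V (\<lambda>t. (1/2) * ((Q b t - Q a t) + ((norm a)\<^sup>2 - (norm b)\<^sup>2)))"
        by (rule Rsmooth_cmult[OF s2])
      have "Rsmooth n V (\<lambda>t. inner (u t) w)"
        by (rule Rsmooth_cong[OF Ropen_Rball[of n t0 \<rho>0, folded V_def] s3]) (simp add: inner_from_sq Q_def wab)
      then show "w \<in> PS" unfolding PS_def by simp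
    qed
    have spanPS: "span Bs \<subseteq> PS" by (rule span_minimal[OF BsPS subPS])
    obtain t' where t': "t' \<in> ?B1" "u t' \<noteq> 0" using near[of 1] by auto
    define a0 where "a0 = u t'"
    have a0S: "a0 \<in> S" using t' by (auto simp: S_def a0_def)
    have clo: "closed (span Bs)" by (rule closed_subspace[OF subspace_span])
    have "\<forall>\<epsilon>>0. \<exists>y\<in>span Bs. dist y a0 < \<epsilon>"
    proof (intro allI impI)
      fix \<epsilon> :: real assume "\<epsilon> > 0"
      then obtain e where e: "e > 0" "\<forall>t\<in>?B1. Rdist n t0 t < e \<longrightarrow> norm (u t) < \<epsilon>" using ucont by blast
      obtain t where t: "t \<in> ?B1" "Rdist n t0 t < e" "u t \<noteq> 0" using near[OF e(1)] by blast
      have "u t \<in> S" using t by (auto simp: S_def)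
      then have "a0 - u t \<in> D" using a0S D_def by blast
      then have "a0 - u t \<in> span Bs" using Bs(3) by blast
      moreover have "dist (a0 - u t) a0 < \<epsilon>" using e(2) t by (simp add: dist_norm)
      ultimately show "\<exists>y\<in>span Bs. dist y a0 < \<epsilon>" by blast
    qed
    then have a0span: "a0 \<in> span Bs" using closed_approachable[OF clo] by blast
    have Sspan: "a \<in> span Bs" if "a \<in> S" for a
    proof -
      have "a - a0 \<in> D" using that a0S D_def by blast
      then have "a - a0 \<in> span Bs" using Bs(3) by blast
      then have "(a - a0) + a0 \<in> span Bs" by (rule span_add[OF _ a0span])
      then show ?thesis by simp
    qed
    have uspan: "u t \<in> span Bs" if "t \<in> ?B1" for t
    proof (cases "u t = 0")
      case True then show ?thesis by (simp add: span_zero)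
    next
      case False then have "u t \<in> S" using that by (auto simp: S_def)
      then show ?thesis by (rule Sspan)
    qed
    define gg where "gg t = coords (u t :: 'a)" for t
    have comp: "Rsmooth n V (\<lambda>t. gg t i)" if i: "i < DIM('a)" for i
    proof -
      obtain y z where yz: "y \<in> span Bs" "\<And>w. w \<in> span Bs \<Longrightarrow> orthogonal z w" "basis_enum i = y + z"
        using orthogonal_subspace_decomp_exists[of Bs "basis_enum i :: 'a"] by blast
      have "Rsmooth n V (\<lambda>t. inner (u t) y)" using spanPS yz(1) PS_def by blast
      moreover have "inner (u t) y = gg t i" if "t \<in> V" for t
      proof -
        have "orthogonal z (u t)" using yz(2) uspan that VB1 by blast
        then have "inner (u t) z = 0" by (simp add: orthogonal_def inner_commute)
        then show ?thesis using i yz(3) by (simp add: gg_def coords_def inner_add_right)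
      qed
      ultimately show ?thesis by (rule Rsmooth_cong[OF Ropen_Rball[of n t0 \<rho>0, folded V_def]])
    qed
    have "Rsmooth_map n DIM('a) V gg"
      unfolding Rsmooth_map_def using comp coords_Rn by (auto simp: gg_def)
    moreover have "p t = tt (p t0) (vec_of (gg t))" if "t \<in> V" for t
      using pt[of t] that VB1 by (auto simp: gg_def vec_of_coords p0_def)
    moreover have "t0 \<in> V" using t0R \<rho>0pos by (simp add: V_def Rball_def)
    ultimately show ?thesis using Ropen_Rball[of n t0 \<rho>0] VB1 B1U unfolding V_def[symmetric] by blast
  qed
qed

lemma diffeology_local:
  assumes D: "diffeology X D" and par: "is_param X (n, U, p)" and V: "\<forall>V\<in>\<V>. Ropen n V" "\<Union>\<V> = U"
    "\<forall>V\<in>\<V>. (n, V, restrict p V) \<in> D"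
  shows "(n, U, p) \<in> D"
proof -
  have "\<forall>n U p. is_param X (n, U, p) \<and>
        (\<exists>\<V>. (\<forall>V\<in>\<V>. Ropen n V) \<and> \<Union>\<V> = U \<and> (\<forall>V\<in>\<V>. (n, V, restrict p V) \<in> D))
        \<longrightarrow> (n, U, p) \<in> D"
    using D unfolding diffeology_def by (elim conjE) assumption
  then show ?thesis using par V by blast
qed

lemma diffeology_comp:
  assumes D: "diffeology X D" and "(n, U, p) \<in> D" "Ropen m V" "Rsmooth_map m n V g" "g ` V \<subseteq> U"
  shows "(m, V, restrict (p \<circ> g) V) \<in> D"
proof -
  have "\<forall>n U p m V g. (n, U, p) \<in> D \<and> Ropen m V \<and> Rsmooth_map m n V g \<and> g ` V \<subseteq> U
        \<longrightarrow> (m, V, restrict (p \<circ> g) V) \<in> D"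
    using D unfolding diffeology_def by (elim conjE) assumption
  then show ?thesis using assms(2-5) by blast
qed

lemma dr_sub_D:
  fixes T :: "'a::euclidean_space set set"
  assumes D: "diffeology (tiling_space T) D" and F: "translation_params T \<subseteq> D"
    and P: "(n, U, p) \<in> dr_diffeology T"
  shows "(n, U, p) \<in> D"
proof -
  have par: "is_param (tiling_space T) (n, U, p)" using P unfolding dr_diffeology_iff by blast
  then have pX: "\<And>t. t \<in> U \<Longrightarrow> p t \<in> tiling_space T" by (auto simp: is_param_iff)
  define \<V> where "\<V> = {V. Ropen n V \<and> V \<subseteq> U \<and> (n, V, restrict p V) \<in> D}"
  have cover: "\<exists>V\<in>\<V>. t0 \<in> V" if t0: "t0 \<in> U" for t0
  proof -
    obtain V g where V: "Ropen n V" "t0 \<in> V" "V \<subseteq> U" "Rsmooth_map n DIM('a) V g"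
      "\<forall>t\<in>V. p t = tt (p t0) (vec_of (g t))"
      using local_smooth_rep[OF P t0] by blast
    define F where "F = restrict (\<lambda>x. tt (p t0) (vec_of x :: 'a)) (Rn DIM('a))"
    have "(DIM('a), Rn DIM('a), F) \<in> translation_params T"
      unfolding translation_params_def F_def using pX[OF t0] by blast
    then have FD: "(DIM('a), Rn DIM('a), F) \<in> D" using F by blast
    have gR: "g ` V \<subseteq> Rn DIM('a)" using V(4) unfolding Rsmooth_map_def by blast
    have "(n, V, restrict (F \<circ> g) V) \<in> D" by (rule diffeology_comp[OF D FD V(1) V(4) gR])
    moreover have "restrict (F \<circ> g) V = restrict p V"
    proof
      fix t show "restrict (F \<circ> g) V t = restrict p V t"
        using V(5) gR by (cases "t \<in> V") (auto simp: F_def)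
    qed
    ultimately have "V \<in> \<V>" using V(1,3) \<V>_def by simp
    then show ?thesis using V(2) by blast
  qed
  have "\<Union>\<V> = U" using cover \<V>_def by blast
  moreover have "\<forall>V\<in>\<V>. Ropen n V" "\<forall>V\<in>\<V>. (n, V, restrict p V) \<in> D" using \<V>_def by auto
  ultimately show ?thesis using diffeology_local[OF D par] by blast
qed

theorem theorem5p8:
  fixes T :: "'a::euclidean_space set set"
  assumes "is_tiling T"
  shows "generated_diffeology (tiling_space T) (translation_params T) = dr_diffeology T"
proof
  show "generated_diffeology (tiling_space T) (translation_params T) \<subseteq> dr_diffeology T"
    by (rule generated_sub_dr)
  show "dr_diffeology T \<subseteq> generated_diffeology (tiling_space T) (translation_params T)"
  proof
    fix P assume P: "P \<in> dr_diffeology T"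
    obtain n U p where nUp: "P = (n, U, p)" by (cases P) blast
    show "P \<in> generated_diffeology (tiling_space T) (translation_params T)"
      unfolding generated_diffeology_def nUp using dr_sub_D P nUp by blast
  qed
qed

end
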